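(* Let $(E,\phi)$ be a $t$-module of dimension $d$ over $K$ with a fixed coordinate system. Assume there exists $a\in\mathbb{F}_q[t]\setminus\mathbb{F}_q$ such that, with $s:=\deg_\tau(\phi_a)$ and $D_a\in\mathrm{Mat}_{d\times d}(K\{\tau\})$ the matrix representing $\phi_a$, the matrix $\sigma^sD_a\in\mathrm{Mat}_{d\times d}(K\{\sigma\})$ has full rank $d$ modulo $\sigma^s$. Then $E$ is abelian and $E$ is $t$-finite.
   Context: $\mathbb{F}_q$ finite field, $K$ perfect field containing $\mathbb{F}_q$, $\ell:\mathbb{F}_q[t]\to K$ an $\mathbb{F}_q$-algebra homomorphism. $K\{\tau\}$ is the skew polynomial ring with $\tau\alpha=\alpha^q\tau$ ($\alpha\in K$), identified with $\mathbb{F}_q$-linear endomorphisms of $\mathbb{G}_a$ over $K$. $K(\!(\sigma)\!)$ is the skew Laurent series field with $\sigma\alpha=\alpha^{1/q}\sigma$, valuation = order in $\sigma$, valuation ring $K[\![\sigma]\!]$; $K\{\sigma\}$ is its subring of skew polynomials in $\sigma$; $K\{\tau\}\subseteq K(\!(\sigma)\!)$ via $\tau\mapsto\sigma^{-1}$ (so $\sigma^sD_a$ has entries in $K\{\sigma\}$). A $t$-module $(E,\phi)$ of dimension $d$: $\mathbb{F}_q$-vector space scheme $E\cong\mathbb{G}_a^d$ over $K$ with $\mathbb{F}_q$-algebra homomorphism $\phi:\mathbb{F}_q[t]\to\mathrm{End}_{\mathrm{grp},\mathbb{F}_q}(E)$, $d\phi_a-\ell(a)$ nilpotent on $\mathrm{Lie}(E)$.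 With a fixed coordinate system $E\cong\mathbb{G}_a^d$, $\phi_a$ is represented by a matrix in $\mathrm{Mat}_{d\times d}(K\{\tau\})$, and $\deg_\tau(\phi_a)$ is the maximal $\tau$-degree of its entries. $E$ is abelian if $\mathrm{Hom}_{\mathrm{grp},\mathbb{F}_q}(E,\mathbb{G}_a)$ ($K$ acting by post-composition, $t$ by pre-composition with $\phi_t$) is a finitely generated $K[t]$-module; $E$ is $t$-finite if $\mathrm{Hom}_{\mathrm{grp},\mathbb{F}_q}(\mathbb{G}_a,E)$ ($K$ acting by pre-composition with scalars, $t$ by post-composition with $\phi_t$) is a finitely generated $K[t]$-module. Rank modulo $\sigma^s$: a matrix $B$ over $K[\![\sigma]\!]$ can be diagonalized by elementary row and column operations over $K[\![\sigma]\!]$ with non-zero diagonal entries $\sigma^{\nu_1},\dots,\sigma^{\nu_n}$; $B$ has rank $r$ modulo $\sigma^s$ if $\#\{i:\nu_i<s\}=r$. *)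

theory Defs
  imports "HOL-Computational_Algebra.Polynomial"
begin

text \<open>F is a subfield of K (the copy of F_q inside K); q = card F.\<close>
definition subfield_set :: "'k::field set \<Rightarrow> bool" where
  "subfield_set F \<longleftrightarrow> 0 \<in> F \<and> 1 \<in> F \<and>
     (\<forall>x\<in>F. \<forall>y\<in>F. x + y \<in> F \<and> x * y \<in> F) \<and> (\<forall>x\<in>F. - x \<in> F \<and> inverse x \<in> F)"

definition perfect_field :: "'k::field itself \<Rightarrow> bool" where
  "perfect_field _ \<longleftrightarrow> CHAR('k) = 0 \<or> (\<forall>y::'k. \<exists>x. x ^ CHAR('k) = y)"

text \<open>Inverse of the q-Frobenius x |-> x^q (well defined on a perfect field of char p).\<close>
definition frob_root :: "nat \<Rightarrow> 'k::field \<Rightarrow> 'k" where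
  "frob_root q x = (THE y. y ^ q = x)"

text \<open>An element sum_i a_i tau^i of K{tau} is stored as the 'k poly with coefficients a_i
  (coefficients on the left); multiplication uses tau a = a^q tau.\<close>
definition tau_mult :: "nat \<Rightarrow> 'k::field poly \<Rightarrow> 'k poly \<Rightarrow> 'k poly" where
  "tau_mult q f g = (\<Sum>i\<le>degree f. \<Sum>j\<le>degree g. monom (coeff f i * coeff g j ^ (q ^ i)) (i + j))"

text \<open>d x d matrices over K{tau}, indexed by a finite type 'n with d = CARD('n).\<close>
definition tmat_mult :: "nat \<Rightarrow> ('n::finite \<Rightarrow> 'n \<Rightarrow> 'k::field poly) \<Rightarrow> ('n \<Rightarrow> 'n \<Rightarrow> 'k poly) \<Rightarrow> ('n \<Rightarrow> 'n \<Rightarrow> 'k poly)" where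
  "tmat_mult q A B = (\<lambda>i j. \<Sum>k\<in>UNIV. tau_mult q (A i k) (B k j))"

definition tmat_one :: "'n::finite \<Rightarrow> 'n \<Rightarrow> 'k::field poly" where
  "tmat_one = (\<lambda>i j. if i = j then 1 else 0)"

definition tmat_pow :: "nat \<Rightarrow> ('n::finite \<Rightarrow> 'n \<Rightarrow> 'k::field poly) \<Rightarrow> nat \<Rightarrow> ('n \<Rightarrow> 'n \<Rightarrow> 'k poly)" where
  "tmat_pow q A n = (tmat_mult q A ^^ n) tmat_one"

text \<open>phi_a = a(phi_t) for a in F_q[t], where D = phi_t; the F_q-coefficients act as scalars.\<close>
definition phi_eval :: "nat \<Rightarrow> ('n::finite \<Rightarrow> 'n \<Rightarrow> 'k::field poly) \<Rightarrow> 'k poly \<Rightarrow> ('n \<Rightarrow> 'n \<Rightarrow> 'k poly)" where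
  "phi_eval q D a = (\<lambda>i j. \<Sum>k\<le>degree a. smult (coeff a k) (tmat_pow q D k i j))"

definition tau_deg :: "('n::finite \<Rightarrow> 'n \<Rightarrow> 'k::field poly) \<Rightarrow> nat" where
  "tau_deg A = Max {degree (A i j) | i j. True}"

text \<open>Differential (action on Lie(E)): the tau^0 coefficient matrix.\<close>
definition dmat :: "('n::finite \<Rightarrow> 'n \<Rightarrow> 'k::field poly) \<Rightarrow> ('n \<Rightarrow> 'n \<Rightarrow> 'k)" where
  "dmat A = (\<lambda>i j. coeff (A i j) 0)"

definition kmat_mult :: "('n::finite \<Rightarrow> 'n \<Rightarrow> 'k::field) \<Rightarrow> ('n \<Rightarrow> 'n \<Rightarrow> 'k) \<Rightarrow> ('n \<Rightarrow> 'n \<Rightarrow> 'k)" where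
  "kmat_mult A B = (\<lambda>i j. \<Sum>k\<in>UNIV. A i k * B k j)"

definition kmat_nilpotent :: "('n::finite \<Rightarrow> 'n \<Rightarrow> 'k::field) \<Rightarrow> bool" where
  "kmat_nilpotent M \<longleftrightarrow> (\<exists>N. (kmat_mult M ^^ N) (\<lambda>i j. if i = j then 1 else 0) = (\<lambda>i j. 0))"

text \<open>t-module structure with phi_t = D, where ell(a) = a(theta), theta = ell(t):
  d(phi_a) - ell(a) is nilpotent for every a in F_q[t].\<close>
definition is_t_module :: "'k::field set \<Rightarrow> 'k \<Rightarrow> ('n::finite \<Rightarrow> 'n \<Rightarrow> 'k poly) \<Rightarrow> bool" where
  "is_t_module F \<theta> D \<longleftrightarrow> (\<forall>a. set (coeffs a) \<subseteq> F \<longrightarrow>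
     kmat_nilpotent (\<lambda>i j. dmat (phi_eval (card F) D a) i j - (if i = j then poly a \<theta> else 0)))"

text \<open>Hom(E,G_a) = row vectors over K{tau}; c in K acts by post-composition (left
  multiplication), t by pre-composition with phi_t (right multiplication by D).\<close>
definition row_act :: "nat \<Rightarrow> ('n::finite \<Rightarrow> 'n \<Rightarrow> 'k::field poly) \<Rightarrow> 'k poly \<Rightarrow> ('n \<Rightarrow> 'k poly) \<Rightarrow> ('n \<Rightarrow> 'k poly)" where
  "row_act q D p m = (\<lambda>j. \<Sum>k\<le>degree p.
      tau_mult q [:coeff p k:] (\<Sum>i\<in>UNIV. tau_mult q (m i) (tmat_pow q D k i j)))"

definition abelian :: "nat \<Rightarrow> ('n::finite \<Rightarrow> 'n \<Rightarrow> 'k::field poly) \<Rightarrow> bool" where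
  "abelian q D \<longleftrightarrow> (\<exists>S. finite S \<and>
     (\<forall>m. \<exists>c. \<forall>j. m j = (\<Sum>g\<in>S. row_act q D (c g) g j)))"

text \<open>Hom(G_a,E) = column vectors over K{tau}; c in K acts by pre-composition with the
  scalar c (right multiplication), t by post-composition with phi_t (left multiplication by D).\<close>
definition col_act :: "nat \<Rightarrow> ('n::finite \<Rightarrow> 'n \<Rightarrow> 'k::field poly) \<Rightarrow> 'k poly \<Rightarrow> ('n \<Rightarrow> 'k poly) \<Rightarrow> ('n \<Rightarrow> 'k poly)" where
  "col_act q D p v = (\<lambda>i. \<Sum>k\<le>degree p.
      tau_mult q (\<Sum>j\<in>UNIV. tau_mult q (tmat_pow q D k i j) (v j)) [:coeff p k:])"

definition t_finite :: "nat \<Rightarrow> ('n::finite \<Rightarrow> 'n \<Rightarrow> 'k::field poly) \<Rightarrow> bool" where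
  "t_finite q D \<longleftrightarrow> (\<exists>S. finite S \<and>
     (\<forall>v. \<exists>c. \<forall>i. v i = (\<Sum>g\<in>S. col_act q D (c g) g i)))"

text \<open>sum_n b_n sigma^n stored as n |-> b_n (left coefficients); sigma a = a^(1/q) sigma.\<close>
definition sig_mult :: "nat \<Rightarrow> (nat \<Rightarrow> 'k::field) \<Rightarrow> (nat \<Rightarrow> 'k) \<Rightarrow> (nat \<Rightarrow> 'k)" where
  "sig_mult q a b = (\<lambda>n. \<Sum>i\<le>n. a i * (frob_root q ^^ i) (b (n - i)))"

definition sig_one :: "nat \<Rightarrow> 'k::field" where
  "sig_one = (\<lambda>n. if n = 0 then 1 else 0)"

definition sig_unit :: "nat \<Rightarrow> (nat \<Rightarrow> 'k::field) \<Rightarrow> bool" where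
  "sig_unit q u \<longleftrightarrow> (\<exists>v. sig_mult q u v = sig_one \<and> sig_mult q v u = sig_one)"

definition sig_pow :: "nat \<Rightarrow> nat \<Rightarrow> 'k::field" where
  "sig_pow \<nu> = (\<lambda>n. if n = \<nu> then 1 else 0)"

definition swap_idx :: "'n \<Rightarrow> 'n \<Rightarrow> 'n \<Rightarrow> 'n" where
  "swap_idx a b i = (if i = a then b else if i = b then a else i)"

inductive elem_ops :: "nat \<Rightarrow> ('n \<Rightarrow> 'n \<Rightarrow> nat \<Rightarrow> 'k::field) \<Rightarrow> ('n \<Rightarrow> 'n \<Rightarrow> nat \<Rightarrow> 'k) \<Rightarrow> bool"
  for q :: nat where
  refl: "elem_ops q B B"
| row_swap: "elem_ops q B C \<Longrightarrow> elem_ops q B (\<lambda>i j. C (swap_idx a b i) j)"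
| col_swap: "elem_ops q B C \<Longrightarrow> elem_ops q B (\<lambda>i j. C i (swap_idx a b j))"
| row_scale: "elem_ops q B C \<Longrightarrow> sig_unit q u \<Longrightarrow>
    elem_ops q B (\<lambda>i j. if i = a then sig_mult q u (C i j) else C i j)"
| col_scale: "elem_ops q B C \<Longrightarrow> sig_unit q u \<Longrightarrow>
    elem_ops q B (\<lambda>i j. if j = a then sig_mult q (C i j) u else C i j)"
| row_add: "elem_ops q B C \<Longrightarrow> a \<noteq> b \<Longrightarrow>
    elem_ops q B (\<lambda>i j. if i = a then (\<lambda>n. C a j n + sig_mult q c (C b j) n) else C i j)"
| col_add: "elem_ops q B C \<Longrightarrow> a \<noteq> b \<Longrightarrow>
    elem_ops q B (\<lambda>i j. if j = a then (\<lambda>n. C i a n + sig_mult q (C i b) c n) else C i j)"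

definition rank_mod :: "nat \<Rightarrow> ('n::finite \<Rightarrow> 'n \<Rightarrow> nat \<Rightarrow> 'k::field) \<Rightarrow> nat \<Rightarrow> nat \<Rightarrow> bool" where
  "rank_mod q B s r \<longleftrightarrow> (\<exists>B'. elem_ops q B B' \<and>
     (\<forall>i j. i \<noteq> j \<longrightarrow> B' i j = (\<lambda>_. 0)) \<and>
     (\<forall>i. B' i i = (\<lambda>_. 0) \<or> (\<exists>\<nu>. B' i i = sig_pow \<nu>)) \<and>
     card {i. \<exists>\<nu><s. B' i i = sig_pow \<nu>} = r)"

text \<open>sigma^s f for f = sum_i a_i tau^i (tau = sigma^-1): sum_i a_i^(q^-s) sigma^(s-i).\<close>
definition sigma_shift :: "nat \<Rightarrow> nat \<Rightarrow> 'k::field poly \<Rightarrow> (nat \<Rightarrow> 'k)" where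
  "sigma_shift q s f = (\<lambda>j. if j \<le> s then (frob_root q ^^ s) (coeff f (s - j)) else 0)"

end

theory Submission
  imports Defs
begin



locale tm =
  fixes F :: "'k::field set"
  assumes sub: "subfield_set F" and finF: "finite F" and perf: "perfect_field TYPE('k)"
begin

lemma F0: "0 \<in> F" and F1: "1 \<in> F" and Fadd: "x \<in> F \<Longrightarrow> y \<in> F \<Longrightarrow> x + y \<in> F"
  and Fmult: "x \<in> F \<Longrightarrow> y \<in> F \<Longrightarrow> x * y \<in> F"
  using sub unfolding subfield_set_def by auto

lemma of_nat_F: "of_nat n \<in> F"
  by (induction n) (auto simp: F0 F1 Fadd)

lemma char_pos: "CHAR('k) > 0"
proof (rule ccontr)
  assume "\<not> CHAR('k) > 0"
  hence c0: "CHAR('k) = 0" by simp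
  have "inj (of_nat :: nat \<Rightarrow> 'k)"
  proof (rule injI)
    fix m n :: nat assume e: "(of_nat m :: 'k) = of_nat n"
    show "m = n"
    proof (rule ccontr)
      assume "m \<noteq> n"
      then consider "m < n" | "n < m" by linarith
      thus False
      proof cases
        case 1
        have "(of_nat (n - m) :: 'k) = of_nat n - of_nat m" using 1 by (simp add: of_nat_diff)
        hence "(of_nat (n - m) :: 'k) = 0" using e by simp
        thus False using c0 1 CHAR_eq0_iff[where 'a='k] zero_less_diff by blast
      next
        case 2
        have "(of_nat (m - n) :: 'k) = of_nat m - of_nat n" using 2 by (simp add: of_nat_diff)
        hence "(of_nat (m - n) :: 'k) = 0" using e by simp
        thus False using c0 2 CHAR_eq0_iff[where 'a='k] zero_less_diff by blast
      qed
    qed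
  qed
  hence "infinite (range (of_nat :: nat \<Rightarrow> 'k))"
    using finite_imageD by blast
  moreover have "range (of_nat :: nat \<Rightarrow> 'k) \<subseteq> F" using of_nat_F by auto
  ultimately show False using finF finite_subset by blast
qed

lemma char_prime: "prime CHAR('k)"
  using char_pos prime_CHAR_semidom by blast

lemma card_ge2: "card F \<ge> 2"
proof -
  have "{0, 1} \<subseteq> F" using F0 F1 by auto
  hence "card {0,1::'k} \<le> card F" using finF card_mono by blast
  thus ?thesis by simp
qed

lemma F_pow_q: assumes "x \<in> F" shows "x ^ card F = x"
proof (cases "x = 0")
  case True thus ?thesis using card_ge2 by simp
next
  case False
  have Fm: "y \<in> F \<Longrightarrow> x * y \<in> F" for y using Fmult assms by blast
  have Fi: "y \<in> F \<Longrightarrow> y / x \<in> F" for y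
    using sub assms unfolding subfield_set_def by (auto simp: divide_inverse)
  have "x * (\<Prod>y\<in>F-{0}. x * y) = x * x ^ (card F - 1) * \<Prod>(F-{0})"
    using finF assms F0 by (simp add: prod.distrib mult_ac card_Diff_singleton)
  also have "x * x ^ (card F - 1) = x ^ Suc (card F - 1)"
    by (subst power_Suc) auto
  also have "Suc (card F - 1) = card F"
    using card_ge2 by simp
  also have "(\<Prod>y\<in>F-{0}. x * y) = (\<Prod>y\<in>F-{0}. y)"
    by (rule prod.reindex_bij_witness[of _ "\<lambda>y. y / x" "\<lambda>y. x * y"]) (use False Fm Fi in auto)
  finally have "x * \<Prod>(F-{0}) = x ^ card F * \<Prod>(F-{0})" .
  moreover have "\<Prod>(F-{0}) \<noteq> (0::'k)" using finF by (simp)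
  ultimately show ?thesis by simp
qed

lemma q_pos: "card F > 0" using card_ge2 by simp

lemma pe_add: "(x + y :: 'k) ^ (CHAR('k) ^ e) = x ^ (CHAR('k) ^ e) + y ^ (CHAR('k) ^ e)"
  using freshmans_dream'[OF char_prime HOL.refl] by blast

lemma pe_inj: assumes "(x::'k) ^ (CHAR('k) ^ e) = y ^ (CHAR('k) ^ e)" shows "x = y"
proof -
  have "x ^ (CHAR('k) ^ e) = (x - y) ^ (CHAR('k) ^ e) + y ^ (CHAR('k) ^ e)"
    using pe_add[of "x - y" y e] by simp
  hence "(x - y) ^ (CHAR('k) ^ e) = 0" using assms by simp
  thus ?thesis by simp
qed

lemma q_prime_power: "\<exists>e. card F = CHAR('k) ^ e"
proof -
  define p where "p = CHAR('k)"
  have pp: "prime p" using char_prime p_def by simp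
  obtain m where qm: "card F = p ^ multiplicity p (card F) * m" and nd: "\<not> p dvd m"
    using multiplicity_decompose'[of "card F" p] q_pos pp
    by (metis not_prime_unit neq0_conv)
  define e where "e = multiplicity p (card F)"
  have qm': "card F = p ^ e * m" using qm e_def by simp
  have m0: "m \<noteq> 0" using qm' q_pos by (metis mult_0_right not_less0)
  have "m = 1"
  proof (rule ccontr)
    assume "m \<noteq> 1"
    hence m2: "m \<ge> 2" using m0 by linarith
    define P :: "'k poly" where "P = (\<Sum>k\<in>{1..m-1}. monom (of_nat (m choose k)) k)"
    have polyP: "poly P z = (z + 1) ^ m - z ^ m - 1" for z
    proof -
      have "(z + 1) ^ m = (\<Sum>k\<le>m. of_nat (m choose k) * z ^ k)"
        by (subst binomial_ring) simp
      also have "{..m} = insert 0 (insert m {1..m-1})" using m2 by auto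
      also have "(\<Sum>k\<in>insert 0 (insert m {1..m-1}). of_nat (m choose k) * z ^ k)
          = 1 + (z ^ m + (\<Sum>k\<in>{1..m-1}. of_nat (m choose k) * z ^ k))"
        using m2 by (subst sum.insert; auto)+
      finally show ?thesis unfolding P_def by (simp add: poly_sum poly_monom)
    qed
    have degP: "degree P \<le> m - 1" unfolding P_def
      by (rule degree_sum_le) (auto intro: order.trans[OF degree_monom_le])
    have c1: "coeff P 1 = of_nat m"
    proof -
      have "coeff P 1 = (\<Sum>k\<in>{1..m-1}. if k = 1 then of_nat (m choose k) else 0)"
        unfolding P_def by (simp add: coeff_sum coeff_monom)
      also have "\<dots> = of_nat (m choose 1)" using m2 by (simp add: sum.delta)
      finally show ?thesis by simp
    qed
    define A where "A = (\<lambda>c. c ^ (p ^ e)) ` F"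
    have injA: "inj_on (\<lambda>c::'k. c ^ (p ^ e)) F"
      by (rule inj_onI) (use pe_inj p_def in blast)
    have cardA: "card A = card F" unfolding A_def using card_image[OF injA] .
    have roots: "poly P z = poly 0 z" if zA: "z \<in> A" for z
    proof -
      obtain c where c: "c \<in> F" "z = c ^ (p ^ e)" using zA unfolding A_def by blast
      have c1F: "c + 1 \<in> F" using c Fadd F1 by blast
      have "z ^ m = c" using F_pow_q[OF c(1)] c qm' by (simp add: power_mult)
      moreover have "(z + 1) ^ m = c + 1"
      proof -
        have "z + 1 = (c + 1) ^ (p ^ e)" using pe_add[of c 1 e] c p_def by simp
        thus ?thesis using F_pow_q[OF c1F] qm' by (simp add: power_mult)
      qed
      ultimately show ?thesis using polyP by simp
    qed
    have "m \<le> card F" using qm' m0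
      by (metis dvd_imp_le dvd_triv_right q_pos)
    hence "P = 0"
      by (intro poly_eqI_degree[OF roots]) (use degP cardA m2 in auto)
    hence "(of_nat m :: 'k) = 0" using c1 by simp
    thus False using nd p_def of_nat_eq_0_iff_char_dvd by blast
  qed
  thus ?thesis using qm' p_def by auto
qed

lemma qi_char: "\<exists>e. card F ^ i = CHAR('k) ^ e"
  using q_prime_power by (metis power_mult)

lemma qi_add: "(x + y::'k) ^ (card F ^ i) = x ^ (card F ^ i) + y ^ (card F ^ i)"
  using qi_char[of i] pe_add by metis

lemma qi_sum: "(sum f A :: 'k) ^ (card F ^ i) = sum (\<lambda>x. f x ^ (card F ^ i)) A"
  using qi_char[of i] freshmans_dream_sum'[OF char_prime] by metis

lemma qi_pos: "card F ^ i > 0" using q_pos by simp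

lemma qi_minus: "(- x::'k) ^ (card F ^ i) = - (x ^ (card F ^ i))"
proof -
  have "0 = (x + - x) ^ (card F ^ i)" using qi_pos[of i] by simp
  also have "\<dots> = x ^ (card F ^ i) + (- x) ^ (card F ^ i)" by (rule qi_add)
  finally show ?thesis by (simp add: eq_neg_iff_add_eq_0 add.commute)
qed

lemma qi_diff: "(x - y::'k) ^ (card F ^ i) = x ^ (card F ^ i) - y ^ (card F ^ i)"
  using qi_add[of x "- y" i] qi_minus[of y i] by simp

lemma qi_inj: "(x::'k) ^ (card F ^ i) = y ^ (card F ^ i) \<Longrightarrow> x = y"
  using qi_char[of i] pe_inj by metis

lemma pe_surj: "\<exists>x::'k. x ^ (CHAR('k) ^ e) = y"
proof (induction e arbitrary: y)
  case 0 thus ?case by simp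
next
  case (Suc e)
  have "\<forall>y::'k. \<exists>x. x ^ CHAR('k) = y" using perf char_pos unfolding perfect_field_def by auto
  then obtain z where z: "z ^ CHAR('k) = y" by blast
  obtain x where x: "x ^ (CHAR('k) ^ e) = z" using Suc by blast
  have "x ^ (CHAR('k) ^ Suc e) = (x ^ (CHAR('k) ^ e)) ^ CHAR('k)"
    by (simp add: power_mult[symmetric] mult.commute)
  hence "x ^ (CHAR('k) ^ Suc e) = y" using z x by simp
  thus ?case by blast
qed

lemma qi_surj: "\<exists>x::'k. x ^ (card F ^ i) = y"
  using qi_char[of i] pe_surj by metis

lemma q_ex1: "\<exists>!x::'k. x ^ card F = y"
  using qi_surj[of 1 y] qi_inj[of _ 1] by auto

lemma fr_pow [simp]: "frob_root (card F) (y::'k) ^ card F = y"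
  unfolding frob_root_def using theI'[OF q_ex1[of y]] by simp

abbreviation frI :: "nat \<Rightarrow> 'k \<Rightarrow> 'k" where "frI n \<equiv> frob_root (card F) ^^ n"

lemma frI_pow [simp]: "frI n x ^ (card F ^ n) = x"
proof (induction n arbitrary: x)
  case 0 thus ?case by simp
next
  case (Suc n)
  have "frI (Suc n) x ^ (card F ^ Suc n) = ((frob_root (card F) (frI n x)) ^ card F) ^ (card F ^ n)"
    by (simp add: power_mult)
  also have "\<dots> = x" using Suc by simp
  finally show ?case .
qed

lemma frI_eq_iff: "frI n x = y \<longleftrightarrow> y ^ (card F ^ n) = x"
  using frI_pow[of n x] qi_inj[of "frI n x" n y] by auto

lemma frI_of [simp]: "frI n (x ^ (card F ^ n)) = x"
  using frI_eq_iff by blast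

lemma frI_mult: "frI n (x * y) = frI n x * frI n y"
  by (subst frI_eq_iff) (simp add: power_mult_distrib)

lemma frI_add: "frI n (x + y) = frI n x + frI n y"
  by (subst frI_eq_iff) (simp add: qi_add)

lemma frI_sum: "frI n (sum f A) = sum (\<lambda>a. frI n (f a)) A"
  by (subst frI_eq_iff) (simp add: qi_sum)

lemma frI_0 [simp]: "frI n 0 = 0"
  by (subst frI_eq_iff) (use q_pos in simp)

lemma frI_1 [simp]: "frI n 1 = 1"
  by (subst frI_eq_iff) simp

lemma frI_minus: "frI n (- x) = - frI n x"
  by (subst frI_eq_iff) (simp add: qi_minus)

lemma frI_diff: "frI n (x - y) = frI n x - frI n y"
  by (subst frI_eq_iff) (simp add: qi_diff)

lemma frI_eq0_iff [simp]: "frI n x = 0 \<longleftrightarrow> x = 0"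
  by (subst frI_eq_iff) (use q_pos in auto)

lemma frI_comp: "frI (m + n) x = frI m (frI n x)"
  by (simp add: funpow_add)

lemma pow_F: "x \<in> F \<Longrightarrow> x ^ (card F ^ n) = x"
  by (induction n) (simp_all add: power_mult F_pow_q)

lemma frI_F: "x \<in> F \<Longrightarrow> frI n x = x"
  by (subst frI_eq_iff) (simp add: pow_F)

end



context tm begin

abbreviation tmul (infixl "\<star>" 70) where "f \<star> g \<equiv> tau_mult (card F) (f::'k poly) g"

lemma pow0 [simp]: "(0::'k) ^ (card F ^ i) = 0" using qi_pos by simp

lemma tau_coeff: "coeff (f \<star> g) n = (\<Sum>i\<le>n. coeff f i * coeff g (n - i) ^ (card F ^ i))"
proof -
  have inner: "(\<Sum>j\<le>degree g. if i + j = n then coeff f i * coeff g j ^ (card F ^ i) else 0)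
      = (if i \<le> n then coeff f i * coeff g (n - i) ^ (card F ^ i) else 0)" for i
  proof (cases "i \<le> n")
    case True
    show ?thesis
    proof (cases "n - i \<le> degree g")
      case True2: True
      have "(\<Sum>j\<le>degree g. if i + j = n then coeff f i * coeff g j ^ (card F ^ i) else 0)
         = (\<Sum>j\<le>degree g. if j = n - i then coeff f i * coeff g j ^ (card F ^ i) else 0)"
        by (rule sum.cong) (use True in auto)
      also have "\<dots> = coeff f i * coeff g (n - i) ^ (card F ^ i)"
        using True2 by (simp add: sum.delta')
      finally show ?thesis using True by simp
    next
      case False
      have "(\<Sum>j\<le>degree g. if i + j = n then coeff f i * coeff g j ^ (card F ^ i) else 0) = 0"
        by (rule sum.neutral) (use False in auto)
      moreover have "coeff g (n - i) = 0" using False by (simp add: coeff_eq_0)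
      ultimately show ?thesis by simp
    qed
  next
    case False
    hence "\<forall>j. i + j \<noteq> n" by auto
    thus ?thesis using False by simp
  qed
  have "coeff (f \<star> g) n = (\<Sum>i\<le>degree f. \<Sum>j\<le>degree g.
          if i + j = n then coeff f i * coeff g j ^ (card F ^ i) else 0)"
    unfolding tau_mult_def by (simp add: coeff_sum coeff_monom)
  also have "\<dots> = (\<Sum>i\<le>degree f. if i \<le> n then coeff f i * coeff g (n - i) ^ (card F ^ i) else 0)"
    using inner by simp
  also have "\<dots> = (\<Sum>i\<le>max n (degree f). if i \<le> n then coeff f i * coeff g (n - i) ^ (card F ^ i) else 0)"
    by (rule sum.mono_neutral_left) (auto simp: coeff_eq_0)
  also have "\<dots> = (\<Sum>i\<le>n. if i \<le> n then coeff f i * coeff g (n - i) ^ (card F ^ i) else 0)"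
    by (rule sum.mono_neutral_right) auto
  also have "\<dots> = (\<Sum>i\<le>n. coeff f i * coeff g (n - i) ^ (card F ^ i))"
    by simp
  finally show ?thesis .
qed

lemma tau_add_left: "(f + g) \<star> h = f \<star> h + g \<star> h"
  by (rule poly_eqI) (simp add: tau_coeff distrib_right sum.distrib)

lemma tau_add_right: "f \<star> (g + h) = f \<star> g + f \<star> h"
  by (rule poly_eqI) (simp add: tau_coeff qi_add distrib_left sum.distrib)

lemma tau_0_left [simp]: "0 \<star> h = 0"
  by (rule poly_eqI) (simp add: tau_coeff)

lemma tau_0_right [simp]: "h \<star> 0 = 0"
  by (rule poly_eqI) (simp add: tau_coeff)

lemma tau_minus_left: "(- f) \<star> h = - (f \<star> h)"
  by (rule poly_eqI) (simp add: tau_coeff sum_negf)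

lemma tau_minus_right: "f \<star> (- h) = - (f \<star> h)"
  by (rule poly_eqI) (simp add: tau_coeff qi_minus sum_negf)

lemma tau_diff_left: "(f - g) \<star> h = f \<star> h - g \<star> h"
  using tau_add_left[of f "- g" h] tau_minus_left[of g h] by simp

lemma tau_diff_right: "h \<star> (f - g) = h \<star> f - h \<star> g"
  using tau_add_right[of h f "- g"] tau_minus_right[of h g] by simp

lemma tau_sum_left: "(sum f A) \<star> h = (\<Sum>a\<in>A. f a \<star> h)"
  by (induction A rule: infinite_finite_induct) (simp_all add: tau_add_left)

lemma tau_sum_right: "h \<star> (sum f A) = (\<Sum>a\<in>A. h \<star> f a)"
  by (induction A rule: infinite_finite_induct) (simp_all add: tau_add_right)

lemma tau_smult_left: "(smult c f) \<star> h = smult c (f \<star> h)"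
  by (rule poly_eqI) (simp add: tau_coeff sum_distrib_left mult.assoc)

lemma tau_const_left: "[:c:] \<star> h = smult c h"
proof (rule poly_eqI)
  fix n
  have "coeff ([:c:] \<star> h) n = (\<Sum>i\<le>n. if i = 0 then c * coeff h n else 0)"
    unfolding tau_coeff by (rule sum.cong) (auto simp: coeff_pCons split: nat.splits)
  thus "coeff ([:c:] \<star> h) n = coeff (smult c h) n" by simp
qed

lemma tau_one_left [simp]: "1 \<star> h = h"
  using tau_const_left[of 1 h] by (simp add: one_pCons)

lemma tau_const_right_coeff: "coeff (f \<star> [:c:]) n = coeff f n * c ^ (card F ^ n)"
proof -
  have "coeff (f \<star> [:c:]) n = (\<Sum>i\<le>n. if i = n then coeff f n * c ^ (card F ^ n) else 0)"
    unfolding tau_coeff by (rule sum.cong) (auto simp: coeff_pCons q_pos split: nat.splits)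
  thus ?thesis by simp
qed

lemma tau_one_right [simp]: "h \<star> 1 = h"
  by (rule poly_eqI) (simp add: tau_const_right_coeff[of h 1, unfolded one_pCons[symmetric]])

lemma tau_smult_F_right: "c \<in> F \<Longrightarrow> f \<star> (smult c g) = smult c (f \<star> g)"
  by (rule poly_eqI) (simp add: tau_coeff sum_distrib_left power_mult_distrib pow_F mult_ac)

lemma tau_const_F_right: "c \<in> F \<Longrightarrow> f \<star> [:c:] = smult c f"
  by (rule poly_eqI) (simp add: tau_const_right_coeff pow_F mult.commute)

lemma tau_degree: "degree (f \<star> g) \<le> degree f + degree g"
proof (rule degree_le)
  show "\<forall>n>degree f + degree g. coeff (f \<star> g) n = 0"
  proof (intro allI impI)
    fix n assume n: "n > degree f + degree g"
    show "coeff (f \<star> g) n = 0" unfolding tau_coeff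
    proof (rule sum.neutral, intro ballI)
      fix i assume "i \<in> {..n}"
      show "coeff f i * coeff g (n - i) ^ (card F ^ i) = 0"
      proof (cases "i \<le> degree f")
        case True
        hence "coeff g (n - i) = 0" using n by (intro coeff_eq_0) linarith
        thus ?thesis by simp
      qed (simp add: coeff_eq_0)
    qed
  qed
qed

lemma tau_assoc: "(f \<star> g) \<star> h = f \<star> (g \<star> h)"
proof (rule poly_eqI)
  fix n
  define G where "G i j l = coeff f i * coeff g j ^ (card F ^ i) * coeff h l ^ (card F ^ (i + j))" for i j l
  have L: "coeff ((f \<star> g) \<star> h) n = (\<Sum>k\<le>n. \<Sum>i\<le>k. G i (k - i) (n - k))"
    unfolding tau_coeff G_def by (simp add: sum_distrib_right)
  have R: "coeff (f \<star> (g \<star> h)) n = (\<Sum>i\<le>n. \<Sum>j\<le>n-i. G i j (n - i - j))"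
    unfolding tau_coeff G_def
    by (simp add: qi_sum sum_distrib_left power_mult_distrib power_mult[symmetric] mult_ac
          flip: power_add)
  have "(\<Sum>(i,j)\<in>{(i,j). i + j \<le> n}. G i j (n - i - j)) = (\<Sum>k\<le>n. \<Sum>i\<le>k. G i (k - i) (n - i - (k - i)))"
    by (rule sum.triangle_reindex_eq)
  also have "\<dots> = (\<Sum>k\<le>n. \<Sum>i\<le>k. G i (k - i) (n - k))"
    by (intro sum.cong refl) auto
  finally have 1: "(\<Sum>(i,j)\<in>{(i,j). i + j \<le> n}. G i j (n - i - j)) = (\<Sum>k\<le>n. \<Sum>i\<le>k. G i (k - i) (n - k))" .
  have "{(i,j). i + j \<le> n} = Sigma {..n} (\<lambda>i. {..n-i})" by auto
  hence 2: "(\<Sum>(i,j)\<in>{(i,j). i + j \<le> n}. G i j (n - i - j)) = (\<Sum>i\<le>n. \<Sum>j\<le>n-i. G i j (n - i - j))"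
    by (simp add: sum.Sigma)
  show "coeff ((f \<star> g) \<star> h) n = coeff (f \<star> (g \<star> h)) n" using L R 1 2 by simp
qed

end



lemma smult_sum_right: "smult c (sum f A) = (\<Sum>a\<in>A. smult c (f a))"
  by (induction A rule: infinite_finite_induct) (simp_all add: smult_add_right)

context tm begin

abbreviation tmm :: "('n::finite \<Rightarrow> 'n \<Rightarrow> 'k poly) \<Rightarrow> ('n \<Rightarrow> 'n \<Rightarrow> 'k poly) \<Rightarrow> ('n \<Rightarrow> 'n \<Rightarrow> 'k poly)"
  where "tmm A B \<equiv> tmat_mult (card F) A B"

abbreviation tpow :: "('n::finite \<Rightarrow> 'n \<Rightarrow> 'k poly) \<Rightarrow> nat \<Rightarrow> ('n \<Rightarrow> 'n \<Rightarrow> 'k poly)"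
  where "tpow A k \<equiv> tmat_pow (card F) A k"

definition rmul :: "('n::finite \<Rightarrow> 'k poly) \<Rightarrow> ('n \<Rightarrow> 'n \<Rightarrow> 'k poly) \<Rightarrow> ('n \<Rightarrow> 'k poly)" where
  "rmul X A = (\<lambda>j. \<Sum>i\<in>UNIV. X i \<star> A i j)"

definition cmul :: "('n::finite \<Rightarrow> 'n \<Rightarrow> 'k poly) \<Rightarrow> ('n \<Rightarrow> 'k poly) \<Rightarrow> ('n \<Rightarrow> 'k poly)" where
  "cmul A v = (\<lambda>i. \<Sum>j\<in>UNIV. A i j \<star> v j)"

lemma tau_if1: "(if c then 1 else 0) \<star> x = (if c then x else 0)" by simp
lemma tau_if1': "x \<star> (if c then 1 else 0) = (if c then x else 0)" by simp

lemma sum_one_left: "(\<Sum>k\<in>UNIV. (if i = k then 1 else 0) \<star> x k) = x (i::'n::finite)"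
  by (simp only: tau_if1) simp

lemma sum_one_right: "(\<Sum>k\<in>UNIV. x k \<star> (if k = j then 1 else 0)) = x (j::'n::finite)"
  by (simp only: tau_if1') simp

abbreviation ract :: "('n::finite \<Rightarrow> 'n \<Rightarrow> 'k poly) \<Rightarrow> 'k poly \<Rightarrow> ('n \<Rightarrow> 'k poly) \<Rightarrow> ('n \<Rightarrow> 'k poly)"
  where "ract D p m \<equiv> row_act (card F) D p m"

abbreviation cact :: "('n::finite \<Rightarrow> 'n \<Rightarrow> 'k poly) \<Rightarrow> 'k poly \<Rightarrow> ('n \<Rightarrow> 'k poly) \<Rightarrow> ('n \<Rightarrow> 'k poly)"
  where "cact D p m \<equiv> col_act (card F) D p m"

lemma tmat_assoc: "tmm (tmm A B) C = tmm A (tmm B C)"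
  unfolding tmat_mult_def
  by (simp add: tau_sum_left tau_sum_right tau_assoc) (rule ext, rule ext, rule sum.swap)

lemma tmat_one_left [simp]: "tmm tmat_one A = A"
  unfolding tmat_mult_def tmat_one_def by (simp only: sum_one_left)

lemma tmat_one_right [simp]: "tmm A tmat_one = A"
  unfolding tmat_mult_def tmat_one_def by (simp only: sum_one_right)

lemma tpow_0 [simp]: "tpow A 0 = tmat_one"
  by (simp add: tmat_pow_def)

lemma tpow_Suc: "tpow A (Suc k) = tmm A (tpow A k)"
  by (simp add: tmat_pow_def)

lemma tpow_add: "tpow A (k + l) = tmm (tpow A k) (tpow A l)"
  by (induction k) (simp_all add: tpow_Suc tmat_assoc)

lemma tpow_Suc': "tpow A (Suc k) = tmm (tpow A k) A"
  using tpow_add[of A k 1] by (simp add: tpow_Suc)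

lemma rmul_assoc: "rmul (rmul X A) B = rmul X (tmm A B)"
  unfolding rmul_def tmat_mult_def
  by (simp add: tau_sum_left tau_sum_right tau_assoc) (rule ext, rule sum.swap)

lemma cmul_assoc: "cmul A (cmul B v) = cmul (tmm A B) v"
  unfolding cmul_def tmat_mult_def
  by (simp add: tau_sum_left tau_sum_right tau_assoc) (rule ext, rule sum.swap)

lemma rmul_one [simp]: "rmul X tmat_one = X"
  unfolding rmul_def tmat_one_def by (simp only: sum_one_right)

lemma cmul_one [simp]: "cmul tmat_one v = v"
  unfolding cmul_def tmat_one_def by (simp only: sum_one_left)

lemma rmul_add: "rmul (\<lambda>i. X i + Y i) A j = rmul X A j + rmul Y A j"
  unfolding rmul_def by (simp add: tau_add_left sum.distrib)

lemma rmul_zero [simp]: "rmul (\<lambda>i. 0) A j = 0"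
  unfolding rmul_def by simp

lemma rmul_smult: "rmul (\<lambda>i. smult c (X i)) A j = smult c (rmul X A j)"
  unfolding rmul_def by (simp add: tau_smult_left smult_sum_right)

lemma rmul_sum: "finite S \<Longrightarrow> rmul (\<lambda>i. \<Sum>s\<in>S. X s i) A j = (\<Sum>s\<in>S. rmul (X s) A j)"
  unfolding rmul_def by (simp add: tau_sum_left) (rule sum.swap)

lemma cmul_add: "cmul A (\<lambda>i. X i + Y i) j = cmul A X j + cmul A Y j"
  unfolding cmul_def by (simp add: tau_add_right sum.distrib)

lemma cmul_zero [simp]: "cmul A (\<lambda>i. 0) j = 0"
  unfolding cmul_def by simp

lemma cmul_rc: "cmul A (\<lambda>i. X i \<star> [:c:]) j = cmul A X j \<star> [:c:]"
  unfolding cmul_def by (simp add: tau_sum_left tau_assoc)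

lemma cmul_sum: "finite S \<Longrightarrow> cmul A (\<lambda>i. \<Sum>s\<in>S. X s i) j = (\<Sum>s\<in>S. cmul A (X s) j)"
  unfolding cmul_def by (simp add: tau_sum_right) (rule sum.swap)

lemma rc_add: "x \<star> [:c + d:] = x \<star> [:c:] + x \<star> [:d:]"
proof -
  have "[:c + d:] = [:c:] + [:d:]" by simp
  thus ?thesis by (metis tau_add_right)
qed

lemma rc_mult: "x \<star> [:c:] \<star> [:d:] = x \<star> [:c * d:]"
  by (simp add: tau_assoc tau_const_left)

lemma rc_0 [simp]: "x \<star> [:0:] = 0" by simp

section \<open>row action\<close>

lemma row_act_alt: "ract D p m = (\<lambda>j. \<Sum>k\<le>degree p. smult (coeff p k) (rmul m (tpow D k) j))"
  unfolding row_act_def rmul_def by (simp add: tau_const_left)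

lemma row_act_N: "degree p \<le> N \<Longrightarrow>
   ract D p m j = (\<Sum>k\<le>N. smult (coeff p k) (rmul m (tpow D k) j))"
  unfolding row_act_alt by (rule sum.mono_neutral_left) (auto simp: coeff_eq_0)

lemma row_act_add_p: "ract D (p + p') m j = ract D p m j + ract D p' m j"
proof -
  define N where "N = max (degree p) (degree p')"
  have "degree (p + p') \<le> N" unfolding N_def by (rule degree_add_le_max)
  hence "ract D (p + p') m j = (\<Sum>k\<le>N. smult (coeff (p + p') k) (rmul m (tpow D k) j))"
    by (rule row_act_N)
  also have "\<dots> = (\<Sum>k\<le>N. smult (coeff p k) (rmul m (tpow D k) j)) + (\<Sum>k\<le>N. smult (coeff p' k) (rmul m (tpow D k) j))"
    by (simp add: sum.distrib smult_add_left)
  also have "\<dots> = ract D p m j + ract D p' m j"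
    using row_act_N[of p N D m j, symmetric] row_act_N[of p' N D m j, symmetric]
    by (simp add: N_def)
  finally show ?thesis .
qed

lemma row_act_smult_p: "ract D (smult c p) m j = smult c (ract D p m j)"
proof -
  have "ract D (smult c p) m j = (\<Sum>k\<le>degree p. smult (coeff (smult c p) k) (rmul m (tpow D k) j))"
    by (rule row_act_N) simp
  also have "\<dots> = smult c (\<Sum>k\<le>degree p. smult (coeff p k) (rmul m (tpow D k) j))"
    by (simp add: smult_sum_right)
  also have "\<dots> = smult c (ract D p m j)"
    using row_act_N[of p "degree p" D m j, symmetric] by simp
  finally show ?thesis .
qed

lemma row_act_const: "ract D [:c:] m j = smult c (m j)"
  by (simp add: row_act_alt)

lemma row_act_0p [simp]: "ract D 0 m j = 0"
  by (simp add: row_act_alt)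

lemma row_act_shift: "ract D (pCons 0 p) m j = rmul (ract D p m) D j"
proof -
  have "ract D (pCons 0 p) m j = (\<Sum>k\<le>Suc (degree p). smult (coeff (pCons 0 p) k) (rmul m (tpow D k) j))"
    by (rule row_act_N) simp
  also have "\<dots> = (\<Sum>k\<le>degree p. smult (coeff p k) (rmul m (tpow D (Suc k)) j))"
    by (subst sum.atMost_Suc_shift) simp
  also have "\<dots> = (\<Sum>k\<le>degree p. smult (coeff p k) (rmul (rmul m (tpow D k)) D j))"
    by (simp add: rmul_assoc tpow_Suc')
  also have "\<dots> = rmul (ract D p m) D j"
    unfolding row_act_alt
    by (simp add: rmul_sum[symmetric] rmul_smult[symmetric])
  finally show ?thesis .
qed

lemma row_act_pCons: "ract D (pCons c p) m j = smult c (m j) + rmul (ract D p m) D j"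
proof -
  have "pCons c p = [:c:] + pCons 0 p" by simp
  hence "ract D (pCons c p) m j = ract D [:c:] m j + ract D (pCons 0 p) m j"
    by (metis row_act_add_p)
  thus ?thesis by (simp add: row_act_const row_act_shift)
qed

lemma row_act_comp: "ract D a (ract D p m) = ract D (a * p) m"
proof (induction a)
  case 0
  thus ?case by (rule ext) simp
next
  case (pCons c a)
  show ?case
  proof (rule ext)
    fix j
    have "ract D (pCons c a) (ract D p m) j
        = smult c (ract D p m j) + rmul (ract D (a * p) m) D j"
      by (simp add: row_act_pCons pCons.IH)
    also have "\<dots> = ract D (smult c p) m j + ract D (pCons 0 (a * p)) m j"
      by (simp add: row_act_smult_p row_act_shift)
    also have "\<dots> = ract D (pCons c a * p) m j"
      by (simp add: row_act_add_p)
    finally show "ract D (pCons c a) (ract D p m) j = ract D (pCons c a * p) m j" .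
  qed
qed

lemma row_act_add_m: "ract D p (\<lambda>i. X i + Y i) j = ract D p X j + ract D p Y j"
  unfolding row_act_alt by (simp add: rmul_add smult_add_right sum.distrib)

lemma row_act_zero_m [simp]: "ract D p (\<lambda>i. 0) j = 0"
  unfolding row_act_alt by simp

lemma row_act_sum_m: "finite S \<Longrightarrow> ract D p (\<lambda>i. \<Sum>s\<in>S. X s i) j = (\<Sum>s\<in>S. ract D p (X s) j)"
  unfolding row_act_alt by (simp add: rmul_sum smult_sum_right) (rule sum.swap)

lemma coeff_F: "set (coeffs a) \<subseteq> F \<Longrightarrow> coeff a k \<in> F"
  using forall_coeffs_conv[of "\<lambda>c. c \<in> F" a] F0 by auto

lemma rmul_Da: assumes "set (coeffs a) \<subseteq> F"
  shows "rmul X (phi_eval (card F) D a) j = ract D a X j"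
proof -
  have "rmul X (phi_eval (card F) D a) j = (\<Sum>i\<in>UNIV. \<Sum>k\<le>degree a. smult (coeff a k) (X i \<star> tpow D k i j))"
    unfolding rmul_def phi_eval_def
    by (simp add: tau_sum_right tau_smult_F_right coeff_F[OF assms])
  also have "\<dots> = ract D a X j"
    unfolding row_act_alt rmul_def by (subst sum.swap) (simp add: smult_sum_right)
  finally show ?thesis .
qed

section \<open>column action\<close>

lemma col_act_alt: "cact D p v = (\<lambda>i. \<Sum>k\<le>degree p. cmul (tpow D k) v i \<star> [:coeff p k:])"
  unfolding col_act_def cmul_def by simp

lemma col_act_N: "degree p \<le> N \<Longrightarrow>
   cact D p v i = (\<Sum>k\<le>N. cmul (tpow D k) v i \<star> [:coeff p k:])"
  unfolding col_act_alt by (rule sum.mono_neutral_left) (auto simp: coeff_eq_0)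

lemma col_act_add_p: "cact D (p + p') v i = cact D p v i + cact D p' v i"
proof -
  define N where "N = max (degree p) (degree p')"
  have "degree (p + p') \<le> N" unfolding N_def by (rule degree_add_le_max)
  hence "cact D (p + p') v i = (\<Sum>k\<le>N. cmul (tpow D k) v i \<star> [:coeff (p + p') k:])"
    by (rule col_act_N)
  also have "\<dots> = (\<Sum>k\<le>N. cmul (tpow D k) v i \<star> [:coeff p k:]) + (\<Sum>k\<le>N. cmul (tpow D k) v i \<star> [:coeff p' k:])"
    by (simp add: sum.distrib rc_add)
  also have "\<dots> = cact D p v i + cact D p' v i"
    using col_act_N[of p N D v i, symmetric] col_act_N[of p' N D v i, symmetric]
    by (simp add: N_def)
  finally show ?thesis .
qed

lemma col_act_smult_p: "cact D (smult c p) v i = cact D p v i \<star> [:c:]"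
proof -
  have "cact D (smult c p) v i = (\<Sum>k\<le>degree p. cmul (tpow D k) v i \<star> [:coeff (smult c p) k:])"
    by (rule col_act_N) simp
  also have "\<dots> = (\<Sum>k\<le>degree p. cmul (tpow D k) v i \<star> [:coeff p k:]) \<star> [:c:]"
    by (simp add: tau_sum_left rc_mult mult.commute)
  also have "\<dots> = cact D p v i \<star> [:c:]"
    using col_act_N[of p "degree p" D v i, symmetric] by simp
  finally show ?thesis .
qed

lemma col_act_const: "cact D [:c:] v i = v i \<star> [:c:]"
  by (simp add: col_act_alt)

lemma col_act_0p [simp]: "cact D 0 v i = 0"
  by (simp add: col_act_alt)

lemma col_act_shift: "cact D (pCons 0 p) v i = cmul D (cact D p v) i"
proof -
  have "cact D (pCons 0 p) v i = (\<Sum>k\<le>Suc (degree p). cmul (tpow D k) v i \<star> [:coeff (pCons 0 p) k:])"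
    by (rule col_act_N) simp
  also have "\<dots> = (\<Sum>k\<le>degree p. cmul (tpow D (Suc k)) v i \<star> [:coeff p k:])"
    by (subst sum.atMost_Suc_shift) simp
  also have "\<dots> = (\<Sum>k\<le>degree p. cmul D (cmul (tpow D k) v) i \<star> [:coeff p k:])"
    by (simp add: cmul_assoc tpow_Suc)
  also have "\<dots> = cmul D (cact D p v) i"
    unfolding col_act_alt
    by (simp add: cmul_sum cmul_rc)
  finally show ?thesis .
qed

lemma col_act_pCons: "cact D (pCons c p) v i = v i \<star> [:c:] + cmul D (cact D p v) i"
proof -
  have "pCons c p = [:c:] + pCons 0 p" by simp
  hence "cact D (pCons c p) v i = cact D [:c:] v i + cact D (pCons 0 p) v i"
    by (metis col_act_add_p)
  thus ?thesis by (simp add: col_act_const col_act_shift)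
qed

lemma col_act_comp: "cact D a (cact D p v) = cact D (a * p) v"
proof (induction a)
  case 0
  thus ?case by (rule ext) simp
next
  case (pCons c a)
  show ?case
  proof (rule ext)
    fix i
    have "cact D (pCons c a) (cact D p v) i
        = cact D p v i \<star> [:c:] + cmul D (cact D (a * p) v) i"
      by (simp add: col_act_pCons pCons.IH)
    also have "\<dots> = cact D (smult c p) v i + cact D (pCons 0 (a * p)) v i"
      by (simp add: col_act_smult_p col_act_shift)
    also have "\<dots> = cact D (pCons c a * p) v i"
      by (simp add: col_act_add_p)
    finally show "cact D (pCons c a) (cact D p v) i = cact D (pCons c a * p) v i" .
  qed
qed

lemma col_act_add_v: "cact D p (\<lambda>i. X i + Y i) j = cact D p X j + cact D p Y j"
  unfolding col_act_alt by (simp add: cmul_add tau_add_left sum.distrib)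

lemma col_act_zero_v [simp]: "cact D p (\<lambda>i. 0) j = 0"
  unfolding col_act_alt by simp

lemma col_act_sum_v: "finite S \<Longrightarrow> cact D p (\<lambda>i. \<Sum>s\<in>S. X s i) j = (\<Sum>s\<in>S. cact D p (X s) j)"
  unfolding col_act_alt by (simp add: cmul_sum tau_sum_left) (rule sum.swap)

lemma cmul_Da: assumes "set (coeffs a) \<subseteq> F"
  shows "cmul (phi_eval (card F) D a) X i = cact D a X i"
proof -
  have "cmul (phi_eval (card F) D a) X i = (\<Sum>j\<in>UNIV. \<Sum>k\<le>degree a. smult (coeff a k) (tpow D k i j \<star> X j))"
    unfolding cmul_def phi_eval_def
    by (simp add: tau_sum_left tau_smult_left)
  also have "\<dots> = cact D a X i"
    unfolding col_act_alt cmul_def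
    by (subst sum.swap) (simp add: smult_sum_right tau_sum_left tau_const_F_right[OF coeff_F[OF assms]])
  finally show ?thesis .
qed

end



lemma swap_idx_idem [simp]: "swap_idx a b (swap_idx a b i) = i"
  unfolding swap_idx_def by auto

lemma sum_swap_idx: "(\<Sum>i\<in>UNIV. f (swap_idx a b i)) = (\<Sum>i\<in>(UNIV::'n::finite set). f i)"
  by (rule sum.reindex_bij_witness[of _ "swap_idx a b" "swap_idx a b"]) auto

context tm begin

abbreviation sm :: "(nat \<Rightarrow> 'k) \<Rightarrow> (nat \<Rightarrow> 'k) \<Rightarrow> (nat \<Rightarrow> 'k)" where
  "sm a b \<equiv> sig_mult (card F) a b"

lemma sm_def': "sm a b n = (\<Sum>i\<le>n. a i * frI i (b (n - i)))"
  unfolding sig_mult_def by simp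

lemma sm_assoc: "sm (sm a b) c = sm a (sm b c)"
proof (rule ext)
  fix n
  define G where "G i j l = a i * frI i (b j) * frI (i + j) (c l)" for i j l
  have L: "sm (sm a b) c n = (\<Sum>k\<le>n. \<Sum>i\<le>k. G i (k - i) (n - k))"
    unfolding sm_def' G_def by (simp add: sum_distrib_right)
  have R: "sm a (sm b c) n = (\<Sum>i\<le>n. \<Sum>j\<le>n-i. G i j (n - i - j))"
    unfolding sm_def' G_def
    by (simp add: frI_sum frI_mult sum_distrib_left mult_ac frI_comp[symmetric])
  have "(\<Sum>(i,j)\<in>{(i,j). i + j \<le> n}. G i j (n - i - j)) = (\<Sum>k\<le>n. \<Sum>i\<le>k. G i (k - i) (n - i - (k - i)))"
    by (rule sum.triangle_reindex_eq)
  also have "\<dots> = (\<Sum>k\<le>n. \<Sum>i\<le>k. G i (k - i) (n - k))"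
    by (intro sum.cong refl) auto
  finally have 1: "(\<Sum>(i,j)\<in>{(i,j). i + j \<le> n}. G i j (n - i - j)) = (\<Sum>k\<le>n. \<Sum>i\<le>k. G i (k - i) (n - k))" .
  have "{(i,j). i + j \<le> n} = Sigma {..n} (\<lambda>i. {..n-i})" by auto
  hence 2: "(\<Sum>(i,j)\<in>{(i,j). i + j \<le> n}. G i j (n - i - j)) = (\<Sum>i\<le>n. \<Sum>j\<le>n-i. G i j (n - i - j))"
    by (simp add: sum.Sigma)
  show "sm (sm a b) c n = sm a (sm b c) n" using L R 1 2 by simp
qed

lemma sm_assoc_n: "sm (sm a b) c n = sm a (sm b c) n"
  by (simp add: sm_assoc)

lemma sm_add_left: "sm (\<lambda>n. a n + b n) c n = sm a c n + sm b c n"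
  unfolding sm_def' by (simp add: distrib_right sum.distrib)

lemma sm_add_right: "sm a (\<lambda>n. b n + c n) n = sm a b n + sm a c n"
  unfolding sm_def' by (simp add: frI_add distrib_left sum.distrib)

lemma sm_sum_left: "sm (\<lambda>n. \<Sum>s\<in>S. f s n) c n = (\<Sum>s\<in>S. sm (f s) c n)"
  unfolding sm_def' by (simp add: sum_distrib_right) (rule sum.swap)

lemma sm_sum_right: "sm a (\<lambda>n. \<Sum>s\<in>S. f s n) n = (\<Sum>s\<in>S. sm a (f s) n)"
  unfolding sm_def' by (simp add: frI_sum sum_distrib_left) (rule sum.swap)

lemma sm_zero_left [simp]: "sm (\<lambda>n. 0) c n = 0"
  unfolding sm_def' by simp

lemma sm_zero_right [simp]: "sm a (\<lambda>n. 0) n = 0"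
  unfolding sm_def' by simp

lemma sm_one_left [simp]: "sm sig_one a = a"
proof (rule ext)
  fix n
  have "sm sig_one a n = (\<Sum>i\<le>n. if i = 0 then a n else 0)"
    unfolding sm_def' sig_one_def by (rule sum.cong) auto
  thus "sm sig_one a n = a n" by simp
qed

lemma sm_one_right [simp]: "sm a sig_one = a"
proof (rule ext)
  fix n
  have "sm a sig_one n = (\<Sum>i\<le>n. if i = n then a n else 0)"
    unfolding sm_def' sig_one_def by (rule sum.cong) auto
  thus "sm a sig_one n = a n" by simp
qed

lemma sm_ord_left: "(\<forall>n<N. a n = 0) \<Longrightarrow> n < N \<Longrightarrow> sm a b n = 0"
  unfolding sm_def' by (intro sum.neutral) auto

lemma sm_ord_right: "(\<forall>n<N. b n = 0) \<Longrightarrow> n < N \<Longrightarrow> sm a b n = 0"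
  unfolding sm_def' by (intro sum.neutral) auto

lemma sm_pow_right: "sm y (sig_pow \<nu>) n = (if \<nu> \<le> n then y (n - \<nu>) else 0)"
proof -
  have "sm y (sig_pow \<nu>) n = (\<Sum>i\<le>n. if i = n - \<nu> \<and> \<nu> \<le> n then y (n - \<nu>) else 0)"
    unfolding sm_def' sig_pow_def by (rule sum.cong) auto
  thus ?thesis by (simp add: sum.delta' split: if_splits)
qed

lemma sm_pow_left: "sm (sig_pow \<nu>) y n = (if \<nu> \<le> n then frI \<nu> (y (n - \<nu>)) else 0)"
proof -
  have "sm (sig_pow \<nu>) y n = (\<Sum>i\<le>n. if i = \<nu> then frI \<nu> (y (n - \<nu>)) else 0)"
    unfolding sm_def' sig_pow_def by (rule sum.cong) auto
  thus ?thesis by (simp add: sum.delta)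
qed

lemma sm_twist: "sm (\<lambda>n. frI M (a n)) (\<lambda>n. frI M (b n)) n = frI M (sm a b n)"
  unfolding sm_def' by (simp add: frI_sum frI_mult frI_comp[symmetric] add.commute)

lemma sm_zero_left' [simp]: "sm (\<lambda>n. 0) c = (\<lambda>n. 0)"
  by (rule ext) simp

lemma sm_zero_right' [simp]: "sm a (\<lambda>n. 0) = (\<lambda>n. 0)"
  by (rule ext) simp

end



context tm begin

definition vr :: "('n::finite \<Rightarrow> nat \<Rightarrow> 'k) \<Rightarrow> ('n \<Rightarrow> 'n \<Rightarrow> nat \<Rightarrow> 'k) \<Rightarrow> 'n \<Rightarrow> nat \<Rightarrow> 'k" where
  "vr w C j = (\<lambda>n. \<Sum>i\<in>UNIV. sm (w i) (C i j) n)"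

definition vc :: "('n::finite \<Rightarrow> 'n \<Rightarrow> nat \<Rightarrow> 'k) \<Rightarrow> ('n \<Rightarrow> nat \<Rightarrow> 'k) \<Rightarrow> 'n \<Rightarrow> nat \<Rightarrow> 'k" where
  "vc C w i = (\<lambda>n. \<Sum>j\<in>UNIV. sm (C i j) (w j) n)"

definition ordge :: "nat \<Rightarrow> ('n \<Rightarrow> nat \<Rightarrow> 'k) \<Rightarrow> bool" where
  "ordge N x \<longleftrightarrow> (\<forall>j n. n < N \<longrightarrow> x j n = 0)"

definition Prow :: "nat \<Rightarrow> ('n::finite \<Rightarrow> 'n \<Rightarrow> nat \<Rightarrow> 'k) \<Rightarrow> bool" where
  "Prow N C \<longleftrightarrow> (\<forall>x. ordge N x \<longrightarrow> (\<exists>w. \<forall>j. vr w C j = x j))"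

definition Pcol :: "nat \<Rightarrow> ('n::finite \<Rightarrow> 'n \<Rightarrow> nat \<Rightarrow> 'k) \<Rightarrow> bool" where
  "Pcol N C \<longleftrightarrow> (\<forall>x. ordge N x \<longrightarrow> (\<exists>w. \<forall>i. vc C w i = x i))"

lemma sum_plus_delta: "(\<Sum>i\<in>(UNIV::'n::finite set). f i + (if i = b then g else 0)) = (\<Sum>i\<in>UNIV. f i) + (g::'k)"
  by (simp add: sum.distrib)

lemma Prow_step:
  assumes "elem_ops (card F) B (C :: 'n::finite \<Rightarrow> 'n \<Rightarrow> nat \<Rightarrow> 'k)" shows "Prow N C \<Longrightarrow> Prow N B"
  using assms
proof (induction rule: elem_ops.induct)
  case (refl B) thus ?case .
next
  case (row_swap B C a b)
  show ?case
  proof (rule row_swap.IH, unfold Prow_def, intro allI impI)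
    fix x :: "'n \<Rightarrow> nat \<Rightarrow> 'k" assume x: "ordge N x"
    obtain w where w: "\<And>j. vr w (\<lambda>i j. C (swap_idx a b i) j) j = x j"
      using row_swap.prems x unfolding Prow_def by blast
    have "vr (\<lambda>i. w (swap_idx a b i)) C j = x j" for j
    proof -
      have "vr (\<lambda>i. w (swap_idx a b i)) C j = vr w (\<lambda>i j. C (swap_idx a b i) j) j"
        unfolding vr_def
        by (rule ext, subst sum_swap_idx[symmetric, of _ a b]) simp
      thus ?thesis using w by simp
    qed
    thus "\<exists>w. \<forall>j. vr w C j = x j" by blast
  qed
next
  case (col_swap B C a b)
  show ?case
  proof (rule col_swap.IH, unfold Prow_def, intro allI impI)
    fix x :: "'n \<Rightarrow> nat \<Rightarrow> 'k" assume x: "ordge N x"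
    have "ordge N (\<lambda>j. x (swap_idx a b j))" using x unfolding ordge_def by auto
    then obtain w where w: "\<And>j. vr w (\<lambda>i j. C i (swap_idx a b j)) j = x (swap_idx a b j)"
      using col_swap.prems unfolding Prow_def by blast
    have "vr w C j = x j" for j
      using w[of "swap_idx a b j"] unfolding vr_def by simp
    thus "\<exists>w. \<forall>j. vr w C j = x j" by blast
  qed
next
  case (row_scale B C u a)
  show ?case
  proof (rule row_scale.IH, unfold Prow_def, intro allI impI)
    fix x :: "'n \<Rightarrow> nat \<Rightarrow> 'k" assume x: "ordge N x"
    obtain w where w: "\<And>j. vr w (\<lambda>i j. if i = a then sm u (C i j) else C i j) j = x j"
      using row_scale.prems x unfolding Prow_def by blast
    define w' where "w' i = (if i = a then sm (w a) u else w i)" for i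
    have "vr w' C j = x j" for j
    proof -
      have "vr w' C j = vr w (\<lambda>i j. if i = a then sm u (C i j) else C i j) j"
        unfolding vr_def w'_def by (rule ext, rule sum.cong) (auto simp: sm_assoc)
      thus ?thesis using w by simp
    qed
    thus "\<exists>w. \<forall>j. vr w C j = x j" by blast
  qed
next
  case (col_scale B C u a)
  obtain v where uv: "sm u v = sig_one" "sm v u = sig_one"
    using col_scale.hyps(2) unfolding sig_unit_def by blast
  show ?case
  proof (rule col_scale.IH, unfold Prow_def, intro allI impI)
    fix x :: "'n \<Rightarrow> nat \<Rightarrow> 'k" assume x: "ordge N x"
    define x' where "x' j = (if j = a then sm (x a) u else x j)" for j
    have "ordge N x'" using x unfolding ordge_def x'_def
      by (auto intro: sm_ord_left)
    then obtain w where w: "\<And>j. vr w (\<lambda>i j. if j = a then sm (C i j) u else C i j) j = x' j"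
      using col_scale.prems unfolding Prow_def by blast
    have "vr w C j = x j" for j
    proof (cases "j = a")
      case False
      thus ?thesis using w[of j] unfolding vr_def x'_def by simp
    next
      case True
      have "sm (vr w C a) u = vr w (\<lambda>i j. if j = a then sm (C i j) u else C i j) a"
        unfolding vr_def by (rule ext) (simp add: sm_sum_left sm_assoc)
      also have "\<dots> = sm (x a) u" using w[of a] by (simp add: x'_def)
      finally have "sm (sm (vr w C a) u) v = sm (sm (x a) u) v" by simp
      thus ?thesis using True uv by (simp add: sm_assoc)
    qed
    thus "\<exists>w. \<forall>j. vr w C j = x j" by blast
  qed
next
  case (row_add B C a b c)
  show ?case
  proof (rule row_add.IH, unfold Prow_def, intro allI impI)
    fix x :: "'n \<Rightarrow> nat \<Rightarrow> 'k" assume x: "ordge N x"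
    obtain w where w: "\<And>j. vr w (\<lambda>i j. if i = a then (\<lambda>n. C a j n + sm c (C b j) n) else C i j) j = x j"
      using row_add.prems x unfolding Prow_def by blast
    define w' where "w' i = (if i = b then (\<lambda>n. w b n + sm (w a) c n) else w i)" for i
    have "vr w' C j = x j" for j
    proof -
      have "vr w' C j n = vr w (\<lambda>i j. if i = a then (\<lambda>n. C a j n + sm c (C b j) n) else C i j) j n" for n
      proof -
        have "vr w' C j n = (\<Sum>i\<in>UNIV. sm (w i) (C i j) n + (if i = b then sm (sm (w a) c) (C b j) n else 0))"
          unfolding vr_def w'_def by (rule sum.cong) (auto simp: sm_add_left)
        also have "\<dots> = (\<Sum>i\<in>UNIV. sm (w i) (C i j) n) + sm (sm (w a) c) (C b j) n"
          by (rule sum_plus_delta)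
        also have "\<dots> = (\<Sum>i\<in>UNIV. sm (w i) (C i j) n + (if i = a then sm (sm (w a) c) (C b j) n else 0))"
          by (rule sum_plus_delta[symmetric])
        also have "\<dots> = vr w (\<lambda>i j. if i = a then (\<lambda>n. C a j n + sm c (C b j) n) else C i j) j n"
          unfolding vr_def by (rule sum.cong) (auto simp: sm_add_right sm_assoc)
        finally show ?thesis .
      qed
      thus ?thesis using w[of j] by auto
    qed
    thus "\<exists>w. \<forall>j. vr w C j = x j" by blast
  qed
next
  case (col_add B C a b c)
  show ?case
  proof (rule col_add.IH, unfold Prow_def, intro allI impI)
    fix x :: "'n \<Rightarrow> nat \<Rightarrow> 'k" assume x: "ordge N x"
    define x' where "x' j = (if j = a then (\<lambda>n. x a n + sm (x b) c n) else x j)" for j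
    have "ordge N x'" using x unfolding ordge_def x'_def
      by (auto intro: sm_ord_left)
    then obtain w where w: "\<And>j. vr w (\<lambda>i j. if j = a then (\<lambda>n. C i a n + sm (C i b) c n) else C i j) j = x' j"
      using col_add.prems unfolding Prow_def by blast
    have wb: "vr w C b = x b" using w[of b] col_add.hyps(2) unfolding vr_def x'_def by simp
    have "vr w C j = x j" for j
    proof (cases "j = a")
      case False
      thus ?thesis using w[of j] unfolding vr_def x'_def by simp
    next
      case True
      have "vr w (\<lambda>i j. if j = a then (\<lambda>n. C i a n + sm (C i b) c n) else C i j) a n
            = vr w C a n + sm (vr w C b) c n" for n
        unfolding vr_def by (simp add: sm_add_right sm_sum_left sm_assoc sum.distrib)
      hence "vr w C a n + sm (x b) c n = x a n + sm (x b) c n" for n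
        using w[of a] wb by (simp add: x'_def)
      thus ?thesis using True by auto
    qed
    thus "\<exists>w. \<forall>j. vr w C j = x j" by blast
  qed
qed

lemma Pcol_step:
  assumes "elem_ops (card F) B (C :: 'n::finite \<Rightarrow> 'n \<Rightarrow> nat \<Rightarrow> 'k)" shows "Pcol N C \<Longrightarrow> Pcol N B"
  using assms
proof (induction rule: elem_ops.induct)
  case (refl B) thus ?case .
next
  case (row_swap B C a b)
  show ?case
  proof (rule row_swap.IH, unfold Pcol_def, intro allI impI)
    fix x :: "'n \<Rightarrow> nat \<Rightarrow> 'k" assume x: "ordge N x"
    have "ordge N (\<lambda>j. x (swap_idx a b j))" using x unfolding ordge_def by auto
    then obtain w where w: "\<And>i. vc (\<lambda>i j. C (swap_idx a b i) j) w i = x (swap_idx a b i)"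
      using row_swap.prems unfolding Pcol_def by blast
    have "vc C w i = x i" for i
      using w[of "swap_idx a b i"] unfolding vc_def by simp
    thus "\<exists>w. \<forall>i. vc C w i = x i" by blast
  qed
next
  case (col_swap B C a b)
  show ?case
  proof (rule col_swap.IH, unfold Pcol_def, intro allI impI)
    fix x :: "'n \<Rightarrow> nat \<Rightarrow> 'k" assume x: "ordge N x"
    obtain w where w: "\<And>i. vc (\<lambda>i j. C i (swap_idx a b j)) w i = x i"
      using col_swap.prems x unfolding Pcol_def by blast
    have "vc C (\<lambda>j. w (swap_idx a b j)) i = x i" for i
    proof -
      have "vc C (\<lambda>j. w (swap_idx a b j)) i = vc (\<lambda>i j. C i (swap_idx a b j)) w i"
        unfolding vc_def
        by (rule ext, subst sum_swap_idx[symmetric, of _ a b]) simp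
      thus ?thesis using w by simp
    qed
    thus "\<exists>w. \<forall>i. vc C w i = x i" by blast
  qed
next
  case (row_scale B C u a)
  obtain v where uv: "sm u v = sig_one" "sm v u = sig_one"
    using row_scale.hyps(2) unfolding sig_unit_def by blast
  show ?case
  proof (rule row_scale.IH, unfold Pcol_def, intro allI impI)
    fix x :: "'n \<Rightarrow> nat \<Rightarrow> 'k" assume x: "ordge N x"
    define x' where "x' i = (if i = a then sm u (x a) else x i)" for i
    have "ordge N x'" using x unfolding ordge_def x'_def
      by (auto intro: sm_ord_right)
    then obtain w where w: "\<And>i. vc (\<lambda>i j. if i = a then sm u (C i j) else C i j) w i = x' i"
      using row_scale.prems unfolding Pcol_def by blast
    have "vc C w i = x i" for i
    proof (cases "i = a")
      case False
      thus ?thesis using w[of i] unfolding vc_def x'_def by simp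
    next
      case True
      have "sm u (vc C w a) = vc (\<lambda>i j. if i = a then sm u (C i j) else C i j) w a"
        unfolding vc_def by (rule ext) (simp add: sm_sum_right sm_assoc)
      also have "\<dots> = sm u (x a)" using w[of a] by (simp add: x'_def)
      finally have "sm v (sm u (vc C w a)) = sm v (sm u (x a))" by simp
      thus ?thesis using True uv by (simp add: sm_assoc[symmetric])
    qed
    thus "\<exists>w. \<forall>i. vc C w i = x i" by blast
  qed
next
  case (col_scale B C u a)
  show ?case
  proof (rule col_scale.IH, unfold Pcol_def, intro allI impI)
    fix x :: "'n \<Rightarrow> nat \<Rightarrow> 'k" assume x: "ordge N x"
    obtain w where w: "\<And>i. vc (\<lambda>i j. if j = a then sm (C i j) u else C i j) w i = x i"
      using col_scale.prems x unfolding Pcol_def by blast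
    define w' where "w' j = (if j = a then sm u (w a) else w j)" for j
    have "vc C w' i = x i" for i
    proof -
      have "vc C w' i = vc (\<lambda>i j. if j = a then sm (C i j) u else C i j) w i"
        unfolding vc_def w'_def by (rule ext, rule sum.cong) (auto simp: sm_assoc)
      thus ?thesis using w by simp
    qed
    thus "\<exists>w. \<forall>i. vc C w i = x i" by blast
  qed
next
  case (row_add B C a b c)
  show ?case
  proof (rule row_add.IH, unfold Pcol_def, intro allI impI)
    fix x :: "'n \<Rightarrow> nat \<Rightarrow> 'k" assume x: "ordge N x"
    define x' where "x' i = (if i = a then (\<lambda>n. x a n + sm c (x b) n) else x i)" for i
    have "ordge N x'" using x unfolding ordge_def x'_def
      by (auto intro: sm_ord_right)
    then obtain w where w: "\<And>i. vc (\<lambda>i j. if i = a then (\<lambda>n. C a j n + sm c (C b j) n) else C i j) w i = x' i"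
      using row_add.prems unfolding Pcol_def by blast
    have wb: "vc C w b = x b" using w[of b] row_add.hyps(2) unfolding vc_def x'_def by simp
    have "vc C w i = x i" for i
    proof (cases "i = a")
      case False
      thus ?thesis using w[of i] unfolding vc_def x'_def by simp
    next
      case True
      have "vc (\<lambda>i j. if i = a then (\<lambda>n. C a j n + sm c (C b j) n) else C i j) w a n
            = vc C w a n + sm c (vc C w b) n" for n
        unfolding vc_def by (simp add: sm_add_left sm_sum_right sm_assoc sum.distrib)
      hence "vc C w a n + sm c (x b) n = x a n + sm c (x b) n" for n
        using w[of a] wb by (simp add: x'_def)
      thus ?thesis using True by auto
    qed
    thus "\<exists>w. \<forall>i. vc C w i = x i" by blast
  qed
next
  case (col_add B C a b c)
  show ?case
  proof (rule col_add.IH, unfold Pcol_def, intro allI impI)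
    fix x :: "'n \<Rightarrow> nat \<Rightarrow> 'k" assume x: "ordge N x"
    obtain w where w: "\<And>i. vc (\<lambda>i j. if j = a then (\<lambda>n. C i a n + sm (C i b) c n) else C i j) w i = x i"
      using col_add.prems x unfolding Pcol_def by blast
    define w' where "w' j = (if j = b then (\<lambda>n. w b n + sm c (w a) n) else w j)" for j
    have "vc C w' i = x i" for i
    proof -
      have "vc C w' i n = vc (\<lambda>i j. if j = a then (\<lambda>n. C i a n + sm (C i b) c n) else C i j) w i n" for n
      proof -
        have "vc C w' i n = (\<Sum>j\<in>UNIV. sm (C i j) (w j) n + (if j = b then sm (C i b) (sm c (w a)) n else 0))"
          unfolding vc_def w'_def by (rule sum.cong) (auto simp: sm_add_right)
        also have "\<dots> = (\<Sum>j\<in>UNIV. sm (C i j) (w j) n) + sm (C i b) (sm c (w a)) n"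
          by (rule sum_plus_delta)
        also have "\<dots> = (\<Sum>j\<in>UNIV. sm (C i j) (w j) n + (if j = a then sm (C i b) (sm c (w a)) n else 0))"
          by (rule sum_plus_delta[symmetric])
        also have "\<dots> = vc (\<lambda>i j. if j = a then (\<lambda>n. C i a n + sm (C i b) c n) else C i j) w i n"
          unfolding vc_def by (rule sum.cong) (auto simp: sm_add_left sm_assoc)
        finally show ?thesis .
      qed
      thus ?thesis using w[of i] by auto
    qed
    thus "\<exists>w. \<forall>i. vc C w i = x i" by blast
  qed
qed

lemma Prow_diag:
  fixes B :: "'n::finite \<Rightarrow> 'n \<Rightarrow> nat \<Rightarrow> 'k"
  assumes off: "\<forall>i j. i \<noteq> j \<longrightarrow> B i j = (\<lambda>_. 0)"
    and dg: "\<forall>i. \<exists>\<nu>\<le>N. B i i = sig_pow \<nu>"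
  shows "Prow N B"
  unfolding Prow_def
proof (intro allI impI)
  fix x :: "'n \<Rightarrow> nat \<Rightarrow> 'k" assume x: "ordge N x"
  obtain \<nu> where nu: "\<And>i. \<nu> i \<le> N \<and> B i i = sig_pow (\<nu> i)"
    using dg by metis
  define w where "w i = (\<lambda>n. x i (n + \<nu> i))" for i
  have "vr w B j = x j" for j
  proof (rule ext)
    fix n
    have "vr w B j n = (\<Sum>i\<in>UNIV. if i = j then sm (w j) (B j j) n else 0)"
      unfolding vr_def by (rule sum.cong) (auto simp: off)
    also have "\<dots> = sm (w j) (B j j) n" by simp
    also have "\<dots> = x j n"
      using nu[of j] x unfolding ordge_def by (auto simp: sm_pow_right w_def)
    finally show "vr w B j n = x j n" .
  qed
  thus "\<exists>w. \<forall>j. vr w B j = x j" by blast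
qed

end



context tm begin

lemma Pcol_diag:
  fixes B :: "'n::finite \<Rightarrow> 'n \<Rightarrow> nat \<Rightarrow> 'k"
  assumes off: "\<forall>i j. i \<noteq> j \<longrightarrow> B i j = (\<lambda>_. 0)"
    and dg: "\<forall>i. \<exists>\<nu>\<le>N. B i i = sig_pow \<nu>"
  shows "Pcol N B"
  unfolding Pcol_def
proof (intro allI impI)
  fix x :: "'n \<Rightarrow> nat \<Rightarrow> 'k" assume x: "ordge N x"
  obtain \<nu> where nu: "\<And>i. \<nu> i \<le> N \<and> B i i = sig_pow (\<nu> i)"
    using dg by metis
  define w where "w i = (\<lambda>n. x i (n + \<nu> i) ^ (card F ^ \<nu> i))" for i
  have "vc B w i = x i" for i
  proof (rule ext)
    fix n
    have "vc B w i n = (\<Sum>j\<in>UNIV. if j = i then sm (B i i) (w i) n else 0)"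
      unfolding vc_def by (rule sum.cong) (auto simp: off)
    also have "\<dots> = sm (B i i) (w i) n" by simp
    also have "\<dots> = x i n"
      using nu[of i] x unfolding ordge_def by (auto simp: sm_pow_left w_def)
    finally show "vc B w i n = x i n" .
  qed
  thus "\<exists>w. \<forall>i. vc B w i = x i" by blast
qed

abbreviation ss :: "nat \<Rightarrow> 'k poly \<Rightarrow> nat \<Rightarrow> 'k" where
  "ss N f \<equiv> sigma_shift (card F) N f"

lemma ss_def': "ss N f k = (if k \<le> N then frI N (coeff f (N - k)) else 0)"
  unfolding sigma_shift_def by simp

lemma ss_add: "ss N (f + g) k = ss N f k + ss N g k"
  by (simp add: ss_def' frI_add)

lemma ss_diff: "ss N (f - g) k = ss N f k - ss N g k"
  by (simp add: ss_def' frI_diff)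

lemma ss_sum: "ss N (sum f S) k = (\<Sum>s\<in>S. ss N (f s) k)"
  by (simp add: ss_def' frI_sum coeff_sum)

lemma ss_monom: "ss N (monom c m) k = (if k \<le> N \<and> N - k = m then frI N c else 0)"
  by (simp add: ss_def' coeff_monom)

lemma ss_vanish:
  assumes "degree f \<le> N" "\<And>k. k < K \<Longrightarrow> k \<le> N \<Longrightarrow> ss N f k = 0"
  shows "degree f \<le> N - K"
proof (rule degree_le, intro allI impI)
  fix l assume l: "N - K < l"
  show "coeff f l = 0"
  proof (cases "l \<le> N")
    case True
    have "ss N f (N - l) = 0" using assms(2)[of "N - l"] l True by auto
    thus ?thesis using True by (simp add: ss_def')
  next
    case False thus ?thesis using assms(1) by (simp add: coeff_eq_0)
  qed
qed

lemma frI_shift: "frI (a + b) (y ^ (card F ^ b)) = frI a y"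
  by (simp add: frI_comp)

lemma ss_mult:
  assumes df: "degree f \<le> A" and dg: "degree g \<le> M"
  shows "ss (A + M) (f \<star> g) k = sm (\<lambda>n. frI M (ss A f n)) (ss M g) k"
proof (cases "k \<le> A + M")
  case False
  have "sm (\<lambda>n. frI M (ss A f n)) (ss M g) k = 0"
    unfolding sm_def'
  proof (rule sum.neutral, intro ballI)
    fix l assume "l \<in> {..k}"
    show "frI M (ss A f l) * frI l (ss M g (k - l)) = 0"
      using False by (cases "l \<le> A") (auto simp: ss_def')
  qed
  thus ?thesis using False by (simp add: ss_def')
next
  case True
  define T where "T = A + M - k"
  define Z where "Z i = frI (A + M) (coeff f i * coeff g (T - i) ^ (card F ^ i))" for i
  define Y where "Y l = frI M (ss A f l) * frI l (ss M g (k - l))" for l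
  define S1 where "S1 = {i. i \<le> T \<and> i \<le> A \<and> T - i \<le> M}"
  define S2 where "S2 = {l. l \<le> k \<and> l \<le> A \<and> k - l \<le> M}"
  have "ss (A + M) (f \<star> g) k = (\<Sum>i\<le>T. Z i)"
    using True unfolding ss_def' Z_def T_def by (simp add: tau_coeff frI_sum)
  also have "\<dots> = (\<Sum>i\<in>S1. Z i)"
  proof (rule sum.mono_neutral_right)
    show "\<forall>i\<in>{..T} - S1. Z i = 0"
    proof
      fix i assume "i \<in> {..T} - S1"
      hence "i > A \<or> T - i > M" unfolding S1_def by auto
      thus "Z i = 0" unfolding Z_def using df dg by (auto simp: coeff_eq_0 q_pos)
    qed
  qed (auto simp: S1_def)
  also have "\<dots> = (\<Sum>l\<in>S2. Y l)"
  proof -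
    have eqZY: "Z (A - l) = Y l" if l: "l \<in> S2" for l
    proof -
      have e1: "T - (A - l) = M - (k - l)" using l True unfolding S2_def T_def by auto
      have e2: "A + M = (M + l) + (A - l)" using l unfolding S2_def by auto
      have "Z (A - l) = frI (A + M) (coeff f (A - l)) * frI (M + l) (coeff g (M - (k - l)))"
        unfolding Z_def frI_mult e1 by (subst (2) e2, subst frI_shift) simp
      also have "\<dots> = Y l"
        using l unfolding Y_def S2_def
        by (simp add: ss_def' frI_comp[symmetric] add.commute)
      finally show ?thesis .
    qed
    show ?thesis
    proof (rule sum.reindex_bij_witness[of _ "\<lambda>l. A - l" "\<lambda>i. A - i"])
      fix i assume i: "i \<in> S1"
      show ii: "A - (A - i) = i" using i unfolding S1_def by auto
      show i2: "A - i \<in> S2" using i True unfolding S1_def S2_def T_def by auto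
      show "Y (A - i) = Z i" using eqZY[OF i2] ii by simp
    next
      fix l assume l: "l \<in> S2"
      show "A - (A - l) = l" using l unfolding S2_def by auto
      show "A - l \<in> S1" using l True unfolding S1_def S2_def T_def by auto
    qed
  qed
  also have "\<dots> = (\<Sum>l\<le>k. Y l)"
  proof (rule sum.mono_neutral_left)
    show "\<forall>l\<in>{..k} - S2. Y l = 0"
    proof
      fix l assume "l \<in> {..k} - S2"
      hence "l > A \<or> k - l > M" unfolding S2_def by auto
      thus "Y l = 0" unfolding Y_def by (auto simp: ss_def')
    qed
  qed (auto simp: S2_def)
  also have "\<dots> = sm (\<lambda>n. frI M (ss A f n)) (ss M g) k"
    unfolding sm_def' Y_def by simp
  finally show ?thesis .
qed

end



context tm begin

lemma sm_diff_left: "sm (\<lambda>n. a n - b n) c n = sm a c n - sm b c n"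
  unfolding sm_def' by (simp add: left_diff_distrib sum_subtractf)

lemma sm_diff_right: "sm a (\<lambda>n. b n - c n) n = sm a b n - sm a c n"
  unfolding sm_def' by (simp add: frI_diff right_diff_distrib sum_subtractf)

definition mono :: "'n \<Rightarrow> 'k \<Rightarrow> nat \<Rightarrow> 'n \<Rightarrow> 'k poly" where
  "mono j0 c l = (\<lambda>j. if j = j0 then monom c l else 0)"

lemma coeff_Qdef: "coeff (\<Sum>l\<le>A. monom (h l) l) m = (if m \<le> A then h m else 0)"
  by (simp add: coeff_sum coeff_monom)

lemma degree_Qdef: "degree (\<Sum>l\<le>A. monom (h l) l) \<le> A"
  by (rule degree_sum_le) (auto intro: order.trans[OF degree_monom_le])

lemma div_row:
  fixes Da :: "'n::finite \<Rightarrow> 'n \<Rightarrow> 'k poly"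
  assumes PR: "Prow (s - 1) (\<lambda>i j. ss s (Da i j))"
    and dDa: "\<And>i j. degree (Da i j) \<le> s" and s1: "s \<ge> 1" and k: "k \<ge> s"
  shows "\<exists>Q. (\<forall>i. degree (Q i) \<le> k - 1) \<and> (\<forall>j. degree (mono j0 c k j - rmul Q Da j) \<le> s - 1)"
proof -
  define A where "A = k - 1"
  define N where "N = A + s"
  define B where "B = (\<lambda>i j. ss s (Da i j))"
  define x where "x = (\<lambda>j n. if j = j0 \<and> n = s - 1 then frI N c else 0)"
  have "ordge (s - 1) x" unfolding ordge_def x_def by auto
  then obtain w where w: "\<And>j. vr w B j = x j" using PR unfolding Prow_def B_def by blast
  define Q where "Q i = (\<Sum>l\<le>A. monom (w i (A - l) ^ (card F ^ N)) l)" for i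
  define wl where "wl i n = (if n \<le> A then w i n else 0)" for i n
  have dQ: "degree (Q i) \<le> A" for i unfolding Q_def by (rule degree_Qdef)
  have ssQ: "(\<lambda>n. frI s (ss A (Q i) n)) = wl i" for i
  proof (rule ext)
    fix n
    show "frI s (ss A (Q i) n) = wl i n"
    proof (cases "n \<le> A")
      case True
      have "frI s (ss A (Q i) n) = frI (s + A) (w i n ^ (card F ^ N))"
        using True unfolding ss_def' Q_def coeff_Qdef by (simp add: frI_comp)
      also have "\<dots> = w i n" unfolding N_def by (simp add: add.commute)
      finally show ?thesis using True unfolding wl_def by simp
    qed (simp add: ss_def' wl_def)
  qed
  define r where "r j = mono j0 c k j - rmul Q Da j" for j
  have "degree (r j) \<le> s - 1" for j
  proof -
    have d1: "degree (mono j0 c k j) \<le> N" unfolding mono_def N_def A_def using s1 k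
      by (auto intro: order.trans[OF degree_monom_le])
    have d2: "degree (rmul Q Da j) \<le> N" unfolding rmul_def N_def
      by (rule degree_sum_le) (auto intro: order.trans[OF tau_degree] add_mono dQ dDa)
    have dr: "degree (r j) \<le> N" unfolding r_def using d1 d2
      by (meson degree_diff_le)
    have "degree (r j) \<le> N - k"
    proof (rule ss_vanish[OF dr])
      fix n assume n: "n < k" "n \<le> N"
      have "ss N (mono j0 c k j) n = x j n"
        unfolding mono_def x_def using n k s1 unfolding N_def A_def
        by (auto simp: ss_monom ss_def')
      also have "\<dots> = (\<Sum>i\<in>UNIV. sm (w i) (B i j) n)" using w[of j] unfolding vr_def by metis
      finally have e1: "ss N (mono j0 c k j) n = (\<Sum>i\<in>UNIV. sm (w i) (B i j) n)" .
      have e2: "ss N (rmul Q Da j) n = (\<Sum>i\<in>UNIV. sm (wl i) (B i j) n)"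
        unfolding rmul_def ss_sum N_def B_def by (simp add: ss_mult[OF dQ dDa] ssQ)
      have "ss N (r j) n = (\<Sum>i\<in>UNIV. sm (\<lambda>m. w i m - wl i m) (B i j) n)"
        unfolding r_def ss_diff e1 e2 by (simp add: sm_diff_left sum_subtractf)
      also have "\<dots> = 0"
      proof (rule sum.neutral, intro ballI)
        fix i
        show "sm (\<lambda>m. w i m - wl i m) (B i j) n = 0"
          by (rule sm_ord_left[of k]) (use n in \<open>auto simp: wl_def A_def\<close>)
      qed
      finally show "ss N (r j) n = 0" .
    qed
    thus ?thesis unfolding N_def A_def using k s1 by simp
  qed
  thus ?thesis using dQ unfolding r_def A_def by blast
qed

lemma div_col:
  fixes Da :: "'n::finite \<Rightarrow> 'n \<Rightarrow> 'k poly"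
  assumes PC: "Pcol (s - 1) (\<lambda>i j. ss s (Da i j))"
    and dDa: "\<And>i j. degree (Da i j) \<le> s" and s1: "s \<ge> 1" and k: "k \<ge> s"
  shows "\<exists>Q. (\<forall>j. degree (Q j) \<le> k - 1) \<and> (\<forall>i. degree (mono i0 c k i - cmul Da Q i) \<le> s - 1)"
proof -
  define A where "A = k - 1"
  define N where "N = s + A"
  define B where "B = (\<lambda>i j. ss s (Da i j))"
  define x where "x = (\<lambda>i n. if i = i0 \<and> n = s - 1 then frI N c else 0)"
  have "ordge (s - 1) (\<lambda>i n. x i n ^ (card F ^ A))" unfolding ordge_def x_def using q_pos by auto
  then obtain w' where w': "\<And>i. vc B w' i = (\<lambda>n. x i n ^ (card F ^ A))"
    using PC unfolding Pcol_def B_def by blast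
  define w where "w j n = frI A (w' j n)" for j n
  have w: "(\<Sum>j\<in>UNIV. sm (\<lambda>n. frI A (B i j n)) (w j) n) = x i n" for i n
  proof -
    have "(\<Sum>j\<in>UNIV. sm (\<lambda>n. frI A (B i j n)) (w j) n) = frI A (vc B w' i n)"
      unfolding vc_def w_def by (simp add: frI_sum sm_twist)
    also have "\<dots> = x i n" using w'[of i] by simp
    finally show ?thesis .
  qed
  define Q where "Q j = (\<Sum>l\<le>A. monom (w j (A - l) ^ (card F ^ A)) l)" for j
  define wl where "wl j n = (if n \<le> A then w j n else 0)" for j n
  have dQ: "degree (Q j) \<le> A" for j unfolding Q_def by (rule degree_Qdef)
  have ssQ: "ss A (Q j) = wl j" for j
  proof (rule ext)
    fix n
    show "ss A (Q j) n = wl j n"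
      unfolding ss_def' Q_def coeff_Qdef wl_def by simp
  qed
  define r where "r i = mono i0 c k i - cmul Da Q i" for i
  have "degree (r i) \<le> s - 1" for i
  proof -
    have d1: "degree (mono i0 c k i) \<le> N" unfolding mono_def N_def A_def using s1 k
      by (auto intro: order.trans[OF degree_monom_le])
    have d2: "degree (cmul Da Q i) \<le> N" unfolding cmul_def N_def
      by (rule degree_sum_le) (auto intro: order.trans[OF tau_degree] add_mono dQ dDa)
    have dr: "degree (r i) \<le> N" unfolding r_def using d1 d2
      by (meson degree_diff_le)
    have "degree (r i) \<le> N - k"
    proof (rule ss_vanish[OF dr])
      fix n assume n: "n < k" "n \<le> N"
      have "ss N (mono i0 c k i) n = x i n"
        unfolding mono_def x_def using n k s1 unfolding N_def A_def
        by (auto simp: ss_monom ss_def')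
      also have "\<dots> = (\<Sum>j\<in>UNIV. sm (\<lambda>n. frI A (B i j n)) (w j) n)" using w by metis
      finally have e1: "ss N (mono i0 c k i) n = (\<Sum>j\<in>UNIV. sm (\<lambda>n. frI A (B i j n)) (w j) n)" .
      have e2: "ss N (cmul Da Q i) n = (\<Sum>j\<in>UNIV. sm (\<lambda>n. frI A (B i j n)) (wl j) n)"
        unfolding cmul_def ss_sum N_def B_def by (simp add: ss_mult[OF dDa dQ] ssQ)
      have "ss N (r i) n = (\<Sum>j\<in>UNIV. sm (\<lambda>n. frI A (B i j n)) (\<lambda>m. w j m - wl j m) n)"
        unfolding r_def ss_diff e1 e2 by (simp add: sm_diff_right sum_subtractf)
      also have "\<dots> = 0"
      proof (rule sum.neutral, intro ballI)
        fix j
        show "sm (\<lambda>n. frI A (B i j n)) (\<lambda>m. w j m - wl j m) n = 0"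
          by (rule sm_ord_right[of k]) (use n in \<open>auto simp: wl_def A_def\<close>)
      qed
      finally show "ss N (r i) n = 0" .
    qed
    thus ?thesis unfolding N_def A_def using k s1 by simp
  qed
  thus ?thesis using dQ unfolding r_def A_def by blast
qed

end



context tm begin

definition MSr :: "('n::finite \<Rightarrow> 'n \<Rightarrow> 'k poly) \<Rightarrow> ('n \<Rightarrow> 'k poly) set \<Rightarrow> ('n \<Rightarrow> 'k poly) \<Rightarrow> bool" where
  "MSr D S m \<longleftrightarrow> (\<exists>c. \<forall>j. m j = (\<Sum>g\<in>S. ract D (c g) g j))"

definition MSc :: "('n::finite \<Rightarrow> 'n \<Rightarrow> 'k poly) \<Rightarrow> ('n \<Rightarrow> 'k poly) set \<Rightarrow> ('n \<Rightarrow> 'k poly) \<Rightarrow> bool" where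
  "MSc D S m \<longleftrightarrow> (\<exists>c. \<forall>i. m i = (\<Sum>g\<in>S. cact D (c g) g i))"

lemma MSr_zero: "MSr D S (\<lambda>j. 0)"
  unfolding MSr_def by (rule exI[of _ "\<lambda>_. 0"]) simp

lemma MSr_add: "MSr D S m \<Longrightarrow> MSr D S m' \<Longrightarrow> MSr D S (\<lambda>j. m j + m' j)"
  unfolding MSr_def
proof (elim exE)
  fix c c' assume c: "\<forall>j. m j = (\<Sum>g\<in>S. ract D (c g) g j)" and c': "\<forall>j. m' j = (\<Sum>g\<in>S. ract D (c' g) g j)"
  show "\<exists>c. \<forall>j. m j + m' j = (\<Sum>g\<in>S. ract D (c g) g j)"
    by (rule exI[of _ "\<lambda>g. c g + c' g"]) (simp add: c c' row_act_add_p sum.distrib)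
qed

lemma MSr_act: assumes "finite S" "MSr D S m" shows "MSr D S (ract D p m)"
proof -
  obtain c where c: "\<And>j. m j = (\<Sum>g\<in>S. ract D (c g) g j)" using assms(2) unfolding MSr_def by blast
  have m: "m = (\<lambda>j. \<Sum>g\<in>S. ract D (c g) g j)" using c by (rule ext)
  have "ract D p m j = (\<Sum>g\<in>S. ract D (p * c g) g j)" for j
    unfolding m by (simp add: row_act_sum_m[OF assms(1)] row_act_comp)
  thus ?thesis unfolding MSr_def by (intro exI[of _ "\<lambda>g. p * c g"]) blast
qed

lemma MSr_gen: assumes "finite S" "g \<in> S" shows "MSr D S g"
proof -
  have "g j = (\<Sum>h\<in>S. ract D (if h = g then 1 else 0) h j)" for j
  proof -
    have "(\<Sum>h\<in>S. ract D (if h = g then 1 else 0) h j) = (\<Sum>h\<in>S. if h = g then g j else 0)"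
      by (rule sum.cong) (auto simp: row_act_const[of D 1, unfolded one_pCons[symmetric]])
    thus ?thesis using assms by simp
  qed
  thus ?thesis unfolding MSr_def by (intro exI[of _ "\<lambda>h. if h = g then 1 else 0"]) blast
qed

lemma MSr_sum: "finite I \<Longrightarrow> (\<And>i. i \<in> I \<Longrightarrow> MSr D S (f i)) \<Longrightarrow> MSr D S (\<lambda>j. \<Sum>i\<in>I. f i j)"
proof (induction I rule: finite_induct)
  case empty thus ?case by (simp add: MSr_zero)
next
  case (insert x F)
  thus ?case using MSr_add[of D S "f x" "\<lambda>j. \<Sum>i\<in>F. f i j"] by simp
qed

lemma MSc_zero: "MSc D S (\<lambda>j. 0)"
  unfolding MSc_def by (rule exI[of _ "\<lambda>_. 0"]) simp

lemma MSc_add: "MSc D S m \<Longrightarrow> MSc D S m' \<Longrightarrow> MSc D S (\<lambda>j. m j + m' j)"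
  unfolding MSc_def
proof (elim exE)
  fix c c' assume c: "\<forall>j. m j = (\<Sum>g\<in>S. cact D (c g) g j)" and c': "\<forall>j. m' j = (\<Sum>g\<in>S. cact D (c' g) g j)"
  show "\<exists>c. \<forall>j. m j + m' j = (\<Sum>g\<in>S. cact D (c g) g j)"
    by (rule exI[of _ "\<lambda>g. c g + c' g"]) (simp add: c c' col_act_add_p sum.distrib)
qed

lemma MSc_act: assumes "finite S" "MSc D S m" shows "MSc D S (cact D p m)"
proof -
  obtain c where c: "\<And>j. m j = (\<Sum>g\<in>S. cact D (c g) g j)" using assms(2) unfolding MSc_def by blast
  have m: "m = (\<lambda>j. \<Sum>g\<in>S. cact D (c g) g j)" using c by (rule ext)
  have "cact D p m j = (\<Sum>g\<in>S. cact D (p * c g) g j)" for j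
    unfolding m by (simp add: col_act_sum_v[OF assms(1)] col_act_comp)
  thus ?thesis unfolding MSc_def by (intro exI[of _ "\<lambda>g. p * c g"]) blast
qed

lemma MSc_gen: assumes "finite S" "g \<in> S" shows "MSc D S g"
proof -
  have "g j = (\<Sum>h\<in>S. cact D (if h = g then 1 else 0) h j)" for j
  proof -
    have "(\<Sum>h\<in>S. cact D (if h = g then 1 else 0) h j) = (\<Sum>h\<in>S. if h = g then g j else 0)"
      by (rule sum.cong) (auto simp: col_act_const[of D 1, unfolded one_pCons[symmetric]])
    thus ?thesis using assms by simp
  qed
  thus ?thesis unfolding MSc_def by (intro exI[of _ "\<lambda>h. if h = g then 1 else 0"]) blast
qed

lemma MSc_sum: "finite I \<Longrightarrow> (\<And>i. i \<in> I \<Longrightarrow> MSc D S (f i)) \<Longrightarrow> MSc D S (\<lambda>j. \<Sum>i\<in>I. f i j)"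
proof (induction I rule: finite_induct)
  case empty thus ?case by (simp add: MSc_zero)
next
  case (insert x F)
  thus ?case using MSc_add[of D S "f x" "\<lambda>j. \<Sum>i\<in>F. f i j"] by simp
qed

lemma decomp: assumes "\<And>j. degree (m j) \<le> n"
  shows "m = (\<lambda>j. \<Sum>j0\<in>(UNIV::'n::finite set). \<Sum>l\<le>n. mono j0 (coeff (m j0) l) l j)"
proof (rule ext)
  fix j
  have "(\<Sum>j0\<in>(UNIV::'n set). \<Sum>l\<le>n. mono j0 (coeff (m j0) l) l j)
      = (\<Sum>j0\<in>(UNIV::'n set). if j = j0 then (\<Sum>l\<le>n. monom (coeff (m j0) l) l) else 0)"
    unfolding mono_def by (rule sum.cong) auto
  also have "\<dots> = m j" using poly_as_sum_of_monoms'[OF assms[of j]] by simp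
  finally show "m j = (\<Sum>j0\<in>(UNIV::'n set). \<Sum>l\<le>n. mono j0 (coeff (m j0) l) l j)" ..
qed

lemma mono_row: "ract D [:c:] (mono j0 1 l) = mono j0 c l"
  by (rule ext) (simp add: row_act_const mono_def smult_monom)

lemma monom_rc: "monom 1 l \<star> [:d:] = monom (d ^ (card F ^ l)) l"
  by (rule poly_eqI) (simp add: tau_const_right_coeff coeff_monom)

lemma mono_col: "cact D [:frI l c:] (mono j0 1 l) = mono j0 c l"
  by (rule ext) (simp add: col_act_const mono_def monom_rc)

lemma all_rows:
  fixes D :: "'n::finite \<Rightarrow> 'n \<Rightarrow> 'k poly"
  assumes aF: "set (coeffs a) \<subseteq> F"
    and PR: "Prow (s - 1) (\<lambda>i j. ss s (phi_eval (card F) D a i j))"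
    and dDa: "\<And>i j. degree (phi_eval (card F) D a i j) \<le> s" and s1: "s \<ge> 1"
  shows "abelian (card F) D"
proof -
  define S where "S = (\<lambda>(j0, l). mono j0 1 l) ` ((UNIV :: 'n set) \<times> {..s-1})"
  have fS: "finite S" unfolding S_def by simp
  have monoMS: "MSr D S (mono j0 c l)" for j0 c l
  proof (induction l arbitrary: j0 c rule: less_induct)
    case (less l)
    have decMS: "MSr D S m" if "\<And>j. degree (m j) \<le> n" "n < l" for m n
    proof -
      have "MSr D S (\<lambda>j. \<Sum>j0\<in>(UNIV::'n set). \<Sum>l'\<le>n. mono j0 (coeff (m j0) l') l' j)"
        by (intro MSr_sum) (use that less in auto)
      thus ?thesis using decomp[of m n, OF that(1)] by simp
    qed
    show ?case
    proof (cases "l \<le> s - 1")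
      case True
      have "MSr D S (mono j0 1 l)" by (rule MSr_gen[OF fS]) (use True in \<open>auto simp: S_def\<close>)
      thus ?thesis using MSr_act[OF fS, of D _ "[:c:]"] mono_row by metis
    next
      case False
      hence k: "l \<ge> s" by simp
      obtain Q where dQ: "\<And>i. degree (Q i) \<le> l - 1"
        and dr: "\<And>j. degree (mono j0 c l j - rmul Q (phi_eval (card F) D a) j) \<le> s - 1"
        using div_row[OF PR dDa s1 k, of j0 c] by blast
      have "MSr D S Q" by (rule decMS[OF dQ]) (use k s1 in auto)
      hence "MSr D S (ract D a Q)" by (rule MSr_act[OF fS])
      moreover have "MSr D S (\<lambda>j. mono j0 c l j - rmul Q (phi_eval (card F) D a) j)"
        by (rule decMS[OF dr]) (use k s1 in auto)
      ultimately have "MSr D S (\<lambda>j. ract D a Q j + (mono j0 c l j - rmul Q (phi_eval (card F) D a) j))"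
        by (rule MSr_add)
      moreover have "(\<lambda>j. ract D a Q j + (mono j0 c l j - rmul Q (phi_eval (card F) D a) j)) = mono j0 c l"
        by (rule ext) (simp add: rmul_Da[OF aF])
      ultimately show ?thesis by simp
    qed
  qed
  have "MSr D S m" for m
  proof -
    define n where "n = (\<Sum>j\<in>UNIV. degree (m j))"
    have dm: "degree (m j) \<le> n" for j unfolding n_def by (rule member_le_sum) auto
    have "MSr D S (\<lambda>j. \<Sum>j0\<in>(UNIV::'n set). \<Sum>l'\<le>n. mono j0 (coeff (m j0) l') l' j)"
      by (intro MSr_sum monoMS) auto
    thus ?thesis using decomp[of m n, OF dm] by simp
  qed
  thus ?thesis unfolding abelian_def MSr_def using fS by blast
qed

lemma all_cols:
  fixes D :: "'n::finite \<Rightarrow> 'n \<Rightarrow> 'k poly"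
  assumes aF: "set (coeffs a) \<subseteq> F"
    and PC: "Pcol (s - 1) (\<lambda>i j. ss s (phi_eval (card F) D a i j))"
    and dDa: "\<And>i j. degree (phi_eval (card F) D a i j) \<le> s" and s1: "s \<ge> 1"
  shows "t_finite (card F) D"
proof -
  define S where "S = (\<lambda>(j0, l). mono j0 1 l) ` ((UNIV :: 'n set) \<times> {..s-1})"
  have fS: "finite S" unfolding S_def by simp
  have monoMS: "MSc D S (mono j0 c l)" for j0 c l
  proof (induction l arbitrary: j0 c rule: less_induct)
    case (less l)
    have decMS: "MSc D S m" if "\<And>j. degree (m j) \<le> n" "n < l" for m n
    proof -
      have "MSc D S (\<lambda>j. \<Sum>j0\<in>(UNIV::'n set). \<Sum>l'\<le>n. mono j0 (coeff (m j0) l') l' j)"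
        by (intro MSc_sum) (use that less in auto)
      thus ?thesis using decomp[of m n, OF that(1)] by simp
    qed
    show ?case
    proof (cases "l \<le> s - 1")
      case True
      have "MSc D S (mono j0 1 l)" by (rule MSc_gen[OF fS]) (use True in \<open>auto simp: S_def\<close>)
      thus ?thesis using MSc_act[OF fS, of D _ "[:frI l c:]"] mono_col by metis
    next
      case False
      hence k: "l \<ge> s" by simp
      obtain Q where dQ: "\<And>i. degree (Q i) \<le> l - 1"
        and dr: "\<And>j. degree (mono j0 c l j - cmul (phi_eval (card F) D a) Q j) \<le> s - 1"
        using div_col[OF PC dDa s1 k, of j0 c] by blast
      have "MSc D S Q" by (rule decMS[OF dQ]) (use k s1 in auto)
      hence "MSc D S (cact D a Q)" by (rule MSc_act[OF fS])
      moreover have "MSc D S (\<lambda>j. mono j0 c l j - cmul (phi_eval (card F) D a) Q j)"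
        by (rule decMS[OF dr]) (use k s1 in auto)
      ultimately have "MSc D S (\<lambda>j. cact D a Q j + (mono j0 c l j - cmul (phi_eval (card F) D a) Q j))"
        by (rule MSc_add)
      moreover have "(\<lambda>j. cact D a Q j + (mono j0 c l j - cmul (phi_eval (card F) D a) Q j)) = mono j0 c l"
        by (rule ext) (simp add: cmul_Da[OF aF])
      ultimately show ?thesis by simp
    qed
  qed
  have "MSc D S m" for m
  proof -
    define n where "n = (\<Sum>j\<in>UNIV. degree (m j))"
    have dm: "degree (m j) \<le> n" for j unfolding n_def by (rule member_le_sum) auto
    have "MSc D S (\<lambda>j. \<Sum>j0\<in>(UNIV::'n set). \<Sum>l'\<le>n. mono j0 (coeff (m j0) l') l' j)"
      by (intro MSc_sum monoMS) auto
    thus ?thesis using decomp[of m n, OF dm] by simp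
  qed
  thus ?thesis unfolding t_finite_def MSc_def using fS by blast
qed

end



theorem proposition6p1:
  fixes F :: "'k::field set" and \<theta> :: 'k and D :: "'n::finite \<Rightarrow> 'n \<Rightarrow> 'k poly"
  assumes "subfield_set F" and "finite F"
    and "perfect_field TYPE('k)"
    and "is_t_module F \<theta> D"
    and "\<exists>a. set (coeffs a) \<subseteq> F \<and> degree a \<ge> 1 \<and>
           (let q = card F; Da = phi_eval q D a; s = tau_deg Da
            in rank_mod q (\<lambda>i j. sigma_shift q s (Da i j)) s (card (UNIV :: 'n set)))"
  shows "abelian (card F) D \<and> t_finite (card F) D"
proof -
  interpret tm F using assms(1-3) by unfold_locales
  obtain a where aF: "set (coeffs a) \<subseteq> F" and
    rk: "rank_mod (card F) (\<lambda>i j. sigma_shift (card F) (tau_deg (phi_eval (card F) D a))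
            (phi_eval (card F) D a i j)) (tau_deg (phi_eval (card F) D a)) (card (UNIV :: 'n set))"
    using assms(5) unfolding Let_def by blast
  define Da where "Da = phi_eval (card F) D a"
  define s where "s = tau_deg Da"
  define B where "B = (\<lambda>i j. sigma_shift (card F) s (Da i j))"
  obtain B' where el: "elem_ops (card F) B B'" and off: "\<forall>i j. i \<noteq> j \<longrightarrow> B' i j = (\<lambda>_. 0)"
    and cd: "card {i. \<exists>\<nu><s. B' i i = sig_pow \<nu>} = card (UNIV :: 'n set)"
    using rk unfolding rank_mod_def Da_def[symmetric] s_def[symmetric] B_def[symmetric] by blast
  have "{i. \<exists>\<nu><s. B' i i = sig_pow \<nu>} = UNIV"
    by (rule card_subset_eq[OF finite_UNIV subset_UNIV cd])
  hence dg: "\<forall>i. \<exists>\<nu><s. B' i i = sig_pow \<nu>" by blast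
  then obtain \<nu> where "\<nu> < s" by blast
  hence s1: "s \<ge> 1" by simp
  have dg': "\<forall>i. \<exists>\<nu>\<le>s - 1. B' i i = sig_pow \<nu>"
  proof
    fix i
    obtain \<mu> where "\<mu> < s" "B' i i = sig_pow \<mu>" using dg by blast
    thus "\<exists>\<nu>\<le>s - 1. B' i i = sig_pow \<nu>" by (intro exI[of _ \<mu>]) simp
  qed
  have PR: "Prow (s - 1) B" by (rule Prow_step[OF el Prow_diag[OF off dg']])
  have PC: "Pcol (s - 1) B" by (rule Pcol_step[OF el Pcol_diag[OF off dg']])
  have dDa: "degree (Da i j) \<le> s" for i j
  proof -
    have fin: "finite {degree (Da i j) | i j. True}"
    proof -
      have "{degree (Da i j) | i j. True} = (\<lambda>(i, j). degree (Da i j)) ` UNIV" by auto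
      thus ?thesis by simp
    qed
    show ?thesis unfolding s_def tau_deg_def by (rule Max_ge[OF fin]) blast
  qed
  have PR': "Prow (s - 1) (\<lambda>i j. sigma_shift (card F) s (phi_eval (card F) D a i j))"
    using PR unfolding B_def Da_def .
  have PC': "Pcol (s - 1) (\<lambda>i j. sigma_shift (card F) s (phi_eval (card F) D a i j))"
    using PC unfolding B_def Da_def .
  have dDa': "\<And>i j. degree (phi_eval (card F) D a i j) \<le> s" using dDa unfolding Da_def .
  have "abelian (card F) D"
    by (rule all_rows[OF aF PR' dDa' s1])
  moreover have "t_finite (card F) D"
    by (rule all_cols[OF aF PC' dDa' s1])
  ultimately show ?thesis ..
qed



end
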